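(* Let $n\ge 2$ and let $G\le S_n$ be fusion controlled. Let $c_0(\mathcal T(G))$ be the number of connected components of $P_0(\mathcal T(G))$, and choose types $T_1,\dots,T_{c_0(\mathcal T(G))}\in\mathcal T(G_0)$ lying in pairwise distinct components, so that every component of $P_0(\mathcal T(G))$ is $C(T_i)$ for exactly one $i$. For each $i$ pick any connected component $C_i$ of $\widetilde P_0(G)$ containing at least one vertex of type $T_i$. Then $$c_0(G)=\sum_{i=1}^{c_0(\mathcal T(G))}\frac{\mu_{T_i}(G)}{\phi(o(T_i))\,k_{C_i}(T_i)}.$$
   Context: All graphs are finite and undirected; components are connected components. For a finite group $G$, $G_0=G\setminus\{1\}$. The proper power graph $P_0(G)$ has vertex set $G_0$, and distinct $x,y\in G_0$ are adjacent iff $x=y^m$ or $y=x^m$ for some $m\in\mathbb N$; $c_0(G)$ is its number of components. For $x\in G_0$ let $[x]=\{y\in G:\langle y\rangle=\langle x\rangle\}$. The proper quotient power graph $\widetilde P_0(G)$ has vertex set $\{[x]:x\in G_0\}$, distinct $[x],[y]$ being adjacent iff some $x'\in[x]$, $y'\in[y]$ are such that one is a positive power of the other. For $\psi\in S_n$ (acting on $\{1,\dots,n\}$), its type $T_\psi$ is the partition of $n$ given by the multiset of lengths of the orbits of $\langle\psi\rangle$ on $\{1,\dots,n\}$ (fixed points count as parts $1$); the type of $[\psi]$ is $T_\psi$ (well defined). A partition $T=[m_1^{t_1},\dots,m_k^{t_k}]$ (distinct parts $m_j$ with multiplicities $t_j$) has order $o(T)=\mathrm{lcm}(m_1,\dots,m_k)$,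 and for $a\in\mathbb N$ its power is $T^a=[(m_1/\gcd(a,m_1))^{t_1\gcd(a,m_1)},\dots,(m_k/\gcd(a,m_k))^{t_k\gcd(a,m_k)}]$ (so $T_{\psi^a}=(T_\psi)^a$). For $G\le S_n$, $\mathcal T(G_0)=\{T_\psi:\psi\in G_0\}$, and the proper power type graph $P_0(\mathcal T(G))$ has vertex set $\mathcal T(G_0)$, distinct $T,T'$ being adjacent iff one is a power of the other; $C(T)$ is its component containing $T$. $\mu_T(G)$ is the number of elements of $G$ of type $T$; $\phi$ is Euler's totient function; for a component $C$ of $\widetilde P_0(G)$, $k_C(T)$ is the number of vertices of $C$ of type $T$. $G\le S_n$ is fusion controlled if for every $\psi\in G$ and $x\in S_n$ with $x^{-1}\psi x\in G$ there exists $y\in N_{S_n}(G)$ with $x^{-1}\psi x=y^{-1}\psi y$. *)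

theory Defs
  imports "HOL-Algebra.Sym_Groups" "HOL-Number_Theory.Number_Theory" "HOL-Library.Multiset"
begin

type_synonym perm = "nat \<Rightarrow> nat"
type_synonym ptype = "nat multiset"   \<comment> \<open>a partition of n, as multiset of parts\<close>

definition conn_rel :: "'a set \<Rightarrow> ('a \<Rightarrow> 'a \<Rightarrow> bool) \<Rightarrow> ('a \<times> 'a) set" where
  "conn_rel V E = {(x, y). x \<in> V \<and> y \<in> V \<and>
      (x, y) \<in> ({(a, b). a \<in> V \<and> b \<in> V \<and> E a b})\<^sup>*}"

definition components :: "'a set \<Rightarrow> ('a \<Rightarrow> 'a \<Rightarrow> bool) \<Rightarrow> 'a set set" where
  "components V E = V // conn_rel V E"

definition component_of :: "'a set \<Rightarrow> ('a \<Rightarrow> 'a \<Rightarrow> bool) \<Rightarrow> 'a \<Rightarrow> 'a set" where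
  "component_of V E x = conn_rel V E `` {x}"

definition G0 :: "perm set \<Rightarrow> perm set" where
  "G0 G = G - {id}"

definition pow_adj :: "perm \<Rightarrow> perm \<Rightarrow> bool" where
  "pow_adj x y \<longleftrightarrow> x \<noteq> y \<and> (\<exists>m::nat. m > 0 \<and> (x = y ^^ m \<or> y = x ^^ m))"

definition c0 :: "perm set \<Rightarrow> nat" where
  "c0 G = card (components (G0 G) pow_adj)"

definition cyc :: "perm \<Rightarrow> perm set" where
  "cyc x = range (\<lambda>m::nat. x ^^ m)"

definition cls :: "perm set \<Rightarrow> perm \<Rightarrow> perm set" where
  "cls G x = {y \<in> G. cyc y = cyc x}"

definition qvert :: "perm set \<Rightarrow> perm set set" where
  "qvert G = cls G ` G0 G"

definition qadj :: "perm set \<Rightarrow> perm set \<Rightarrow> bool" where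
  "qadj X Y \<longleftrightarrow> X \<noteq> Y \<and> (\<exists>x\<in>X. \<exists>y\<in>Y. \<exists>m::nat. m > 0 \<and> (x = y ^^ m \<or> y = x ^^ m))"

definition orb :: "perm \<Rightarrow> nat \<Rightarrow> nat set" where
  "orb \<psi> i = range (\<lambda>m::nat. (\<psi> ^^ m) i)"

definition ptype_of :: "nat \<Rightarrow> perm \<Rightarrow> ptype" where
  "ptype_of n \<psi> = image_mset card (mset_set (orb \<psi> ` {1..n}))"

definition type_order :: "ptype \<Rightarrow> nat" where
  "type_order T = Lcm (set_mset T)"

definition type_pow :: "ptype \<Rightarrow> nat \<Rightarrow> ptype" where
  "type_pow T a = sum_mset (image_mset (\<lambda>m. replicate_mset (gcd a m) (m div gcd a m)) T)"

definition types0 :: "nat \<Rightarrow> perm set \<Rightarrow> ptype set" where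
  "types0 n G = ptype_of n ` G0 G"

definition type_adj :: "ptype \<Rightarrow> ptype \<Rightarrow> bool" where
  "type_adj T T' \<longleftrightarrow> T \<noteq> T' \<and> (\<exists>a::nat. a > 0 \<and> (T = type_pow T' a \<or> T' = type_pow T a))"

definition c0_types :: "nat \<Rightarrow> perm set \<Rightarrow> nat" where
  "c0_types n G = card (components (types0 n G) type_adj)"

definition type_comp :: "nat \<Rightarrow> perm set \<Rightarrow> ptype \<Rightarrow> ptype set" where
  "type_comp n G T = component_of (types0 n G) type_adj T"

definition mu :: "nat \<Rightarrow> ptype \<Rightarrow> perm set \<Rightarrow> nat" where
  "mu n T G = card {\<psi> \<in> G. ptype_of n \<psi> = T}"

definition kC :: "nat \<Rightarrow> perm set set \<Rightarrow> ptype \<Rightarrow> nat" where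
  "kC n C T = card {X \<in> C. \<exists>\<psi>\<in>X. ptype_of n \<psi> = T}"

definition normalizer_S :: "nat \<Rightarrow> perm set \<Rightarrow> perm set" where
  "normalizer_S n G = {y. y permutes {1..n} \<and> (\<lambda>g. inv' y \<circ> g \<circ> y) ` G = G}"

definition fusion_controlled :: "nat \<Rightarrow> perm set \<Rightarrow> bool" where
  "fusion_controlled n G \<longleftrightarrow>
     (\<forall>\<psi>\<in>G. \<forall>x. x permutes {1..n} \<and> inv' x \<circ> \<psi> \<circ> x \<in> G \<longrightarrow>
        (\<exists>y\<in>normalizer_S n G. inv' x \<circ> \<psi> \<circ> x = inv' y \<circ> \<psi> \<circ> y))"

end

theory Submission
  imports Defs
begin


lemma funpow_mult_fix:
  assumes "(f ^^ L) z = z" shows "(f ^^ (k * L)) z = z"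
proof (induction k)
  case 0 then show ?case by simp
next
  case (Suc k)
  have "(f ^^ (Suc k * L)) z = (f ^^ L) ((f ^^ (k * L)) z)"
    by (simp add: funpow_add add.commute)
  then show ?case using Suc assms by simp
qed

lemma funpow_mod_fix:
  assumes "(f ^^ L) z = z" shows "(f ^^ a) z = (f ^^ (a mod L)) z"
proof -
  have "a = a mod L + (a div L) * L" by simp
  then have "(f ^^ a) z = (f ^^ (a mod L)) ((f ^^ ((a div L) * L)) z)"
    by (metis comp_apply funpow_add)
  then show ?thesis using funpow_mult_fix[OF assms] by simp
qed

lemma period_lemma:
  fixes f :: "'a \<Rightarrow> 'a"
  assumes inj: "inj f" and N: "N > 0" "(f ^^ N) z = z"
  shows "finite (range (\<lambda>m. (f ^^ m) z))"
    and "card (range (\<lambda>m. (f ^^ m) z)) > 0"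
    and "(f ^^ card (range (\<lambda>m. (f ^^ m) z))) z = z"
    and "\<And>a b. (f ^^ a) z = (f ^^ b) z \<longleftrightarrow>
            a mod card (range (\<lambda>m. (f ^^ m) z)) = b mod card (range (\<lambda>m. (f ^^ m) z))"
proof -
  define L where "L = (LEAST m. m > 0 \<and> (f ^^ m) z = z)"
  have L: "L > 0 \<and> (f ^^ L) z = z" unfolding L_def by (rule LeastI[of _ N]) (use N in auto)
  have Lmin: "\<And>m. 0 < m \<Longrightarrow> m < L \<Longrightarrow> (f ^^ m) z \<noteq> z"
    unfolding L_def using not_less_Least by blast
  have dist: "(f ^^ i) z \<noteq> (f ^^ j) z" if "i < j" "j < L" for i j
  proof
    assume eq: "(f ^^ i) z = (f ^^ j) z"
    have "(f ^^ i) ((f ^^ (j - i)) z) = (f ^^ i) z"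
      using eq that by (metis add_diff_inverse_nat comp_apply funpow_add not_less_iff_gr_or_eq)
    then have "(f ^^ (j - i)) z = z" using inj_fn[OF inj, of i] by (simp add: inj_eq)
    then show False using Lmin[of "j - i"] that by auto
  qed
  have R: "range (\<lambda>m. (f ^^ m) z) = (\<lambda>m. (f ^^ m) z) ` {..<L}"
  proof
    show "range (\<lambda>m. (f ^^ m) z) \<subseteq> (\<lambda>m. (f ^^ m) z) ` {..<L}"
    proof
      fix y assume "y \<in> range (\<lambda>m. (f ^^ m) z)"
      then obtain m where "y = (f ^^ m) z" by auto
      then have "y = (f ^^ (m mod L)) z" using funpow_mod_fix[of L f z m] L by simp
      moreover have "m mod L < L" using L by simp
      ultimately show "y \<in> (\<lambda>m. (f ^^ m) z) ` {..<L}" by auto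
    qed
  qed auto
  have injL: "inj_on (\<lambda>m. (f ^^ m) z) {..<L}"
    unfolding inj_on_def by (metis dist lessThan_iff nat_neq_iff)
  have cardL: "card (range (\<lambda>m. (f ^^ m) z)) = L"
    unfolding R using card_image[OF injL] by simp
  show "finite (range (\<lambda>m. (f ^^ m) z))" unfolding R by simp
  show "card (range (\<lambda>m. (f ^^ m) z)) > 0" using cardL L by simp
  show "(f ^^ card (range (\<lambda>m. (f ^^ m) z))) z = z" using cardL L by simp
  fix a b
  have "(f ^^ a) z = (f ^^ b) z \<longleftrightarrow> (f ^^ (a mod L)) z = (f ^^ (b mod L)) z"
    using funpow_mod_fix[of L f z] L by metis
  also have "\<dots> \<longleftrightarrow> a mod L = b mod L"
    using dist L by (metis mod_less_divisor nat_neq_iff)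
  finally show "(f ^^ a) z = (f ^^ b) z \<longleftrightarrow>
            a mod card (range (\<lambda>m. (f ^^ m) z)) = b mod card (range (\<lambda>m. (f ^^ m) z))"
    using cardL by simp
qed



lemma perm_finite_order:
  assumes "p permutes S" "finite S"
  shows "\<exists>N>0. p ^^ N = id"
proof -
  have fin: "finite {q. q permutes S}" using finite_permutations[OF assms(2)] .
  have "(\<lambda>m. p ^^ m) ` UNIV \<subseteq> {q. q permutes S}" using permutes_funpow[OF assms(1)] by auto
  then have "finite (range (\<lambda>m. p ^^ m))" using fin finite_subset by blast
  then have "\<not> inj (\<lambda>m::nat. p ^^ m)" using infinite_UNIV_nat finite_imageD by blast
  then obtain i j where ij: "i \<noteq> j" "p ^^ i = p ^^ j" unfolding inj_def by blast
  have main: "p ^^ (b - a) = id" if "a < b" "p ^^ a = p ^^ b" for a b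
  proof
    fix x
    have "(p ^^ (b - a)) x = x"
      using funpow_diff[of p a b x] that permutes_inj[OF assms(1)] by auto
    then show "(p ^^ (b - a)) x = id x" by simp
  qed
  show ?thesis
  proof (cases "i < j")
    case True then show ?thesis using main[of i j] ij by (intro exI[of _ "j - i"]) auto
  next
    case False then have "j < i" using ij by auto
    then show ?thesis using main[of j i] ij by (intro exI[of _ "i - j"]) auto
  qed
qed

lemma comp_funpow_id: "((\<lambda>h. x \<circ> h) ^^ m) id = (x::'a\<Rightarrow>'a) ^^ m"
  by (induction m) (auto simp: fun_eq_iff)

lemma cyc_alt: "cyc x = range (\<lambda>m. ((\<lambda>h. x \<circ> h) ^^ m) id)"
  unfolding cyc_def comp_funpow_id ..

lemma orb_cyc: "orb p i = (\<lambda>g. g i) ` cyc p"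
  unfolding orb_def cyc_def by auto

lemma cyc_props:
  assumes "x permutes S" "finite S"
  shows "finite (cyc x)" "card (cyc x) > 0" "x ^^ card (cyc x) = id"
    "\<And>a b. x ^^ a = x ^^ b \<longleftrightarrow> a mod card (cyc x) = b mod card (cyc x)"
proof -
  obtain N where N: "N > 0" "x ^^ N = id" using perm_finite_order[OF assms] by blast
  have inj: "inj (\<lambda>h. x \<circ> h)"
    using permutes_inj[OF assms(1)] unfolding inj_def by (metis fun.inj_map_strong inj_eq)
  have N': "((\<lambda>h. x \<circ> h) ^^ N) id = id" using N comp_funpow_id by metis
  note P = period_lemma[OF inj N(1) N', folded cyc_alt]
  show "finite (cyc x)" "card (cyc x) > 0" using P by auto
  show "x ^^ card (cyc x) = id" using P(3) comp_funpow_id by metis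
  fix a b show "x ^^ a = x ^^ b \<longleftrightarrow> a mod card (cyc x) = b mod card (cyc x)"
    using P(4)[of a b] comp_funpow_id by metis
qed

lemma orb_props:
  assumes "x permutes S" "finite S"
  shows "finite (orb x i)" "card (orb x i) > 0"
    "\<And>a b. (x ^^ a) i = (x ^^ b) i \<longleftrightarrow> a mod card (orb x i) = b mod card (orb x i)"
proof -
  obtain N where N: "N > 0" "x ^^ N = id" using perm_finite_order[OF assms] by blast
  have N': "(x ^^ N) i = i" using N by simp
  note P = period_lemma[OF permutes_inj[OF assms(1)] N(1) N', folded orb_def]
  show "finite (orb x i)" "card (orb x i) > 0" using P by auto
  fix a b show "(x ^^ a) i = (x ^^ b) i \<longleftrightarrow> a mod card (orb x i) = b mod card (orb x i)"
    using P(4) by blast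
qed

lemma cyc_dvd_iff:
  assumes "x permutes S" "finite S"
  shows "x ^^ k = id \<longleftrightarrow> card (cyc x) dvd k"
  using cyc_props(4)[OF assms, of k 0] by (simp add: dvd_eq_mod_eq_0)

lemma orb_dvd_iff:
  assumes "x permutes S" "finite S"
  shows "(x ^^ k) i = i \<longleftrightarrow> card (orb x i) dvd k"
  using orb_props(3)[OF assms, where a=k and b=0 and i=i] by (simp add: dvd_eq_mod_eq_0)

lemma type_order_ptype:
  assumes "x permutes {1..n}"
  shows "type_order (ptype_of n x) = card (cyc x)"
proof -
  have set: "set_mset (ptype_of n x) = (\<lambda>i. card (orb x i)) ` {1..n}"
    unfolding ptype_of_def by auto
  have "Lcm ((\<lambda>i. card (orb x i)) ` {1..n}) dvd k \<longleftrightarrow> card (cyc x) dvd k" for k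
  proof -
    have "Lcm ((\<lambda>i. card (orb x i)) ` {1..n}) dvd k \<longleftrightarrow> (\<forall>i\<in>{1..n}. (x ^^ k) i = i)"
      by (simp add: Lcm_dvd_iff orb_dvd_iff[OF assms])
    also have "\<dots> \<longleftrightarrow> x ^^ k = id"
    proof
      assume A: "\<forall>i\<in>{1..n}. (x ^^ k) i = i"
      show "x ^^ k = id"
      proof
        fix i show "(x ^^ k) i = id i"
          using A permutes_not_in[OF permutes_funpow[OF assms, of k], of i] by (cases "i \<in> {1..n}") auto
      qed
    qed auto
    also have "\<dots> \<longleftrightarrow> card (cyc x) dvd k" using cyc_dvd_iff[OF assms] by simp
    finally show ?thesis .
  qed
  then have "Lcm ((\<lambda>i. card (orb x i)) ` {1..n}) = card (cyc x)"
    by (meson dvd_antisym dvd_refl)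
  then show ?thesis unfolding type_order_def set .
qed

lemma ptype_cyc: "cyc x = cyc y \<Longrightarrow> ptype_of n x = ptype_of n y"
  unfolding ptype_of_def orb_cyc by simp



lemma funpow_one: "(f::'a\<Rightarrow>'a) ^^ (1::nat) = f" by simp

lemma cyc_pow_subset: "cyc (x ^^ j) \<subseteq> cyc x"
  unfolding cyc_def by (auto simp: funpow_mult)

lemma cyc_pow_eq_iff:
  assumes "x permutes S" "finite S"
  shows "cyc (x ^^ j) = cyc x \<longleftrightarrow> coprime j (card (cyc x))"
proof -
  let ?c = "card (cyc x)"
  have "cyc (x ^^ j) = cyc x \<longleftrightarrow> x \<in> cyc (x ^^ j)"
  proof
    assume "x \<in> cyc (x ^^ j)"
    then obtain m where m: "x = (x ^^ j) ^^ m" unfolding cyc_def by auto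
    have "cyc x \<subseteq> cyc (x ^^ j)"
    proof
      fix y assume "y \<in> cyc x"
      then obtain k where "y = x ^^ k" unfolding cyc_def by auto
      then have "y = (x ^^ j) ^^ (m * k)" using m by (metis funpow_mult)
      then show "y \<in> cyc (x ^^ j)" unfolding cyc_def by auto
    qed
    then show "cyc (x ^^ j) = cyc x" using cyc_pow_subset by blast
  next
    assume "cyc (x ^^ j) = cyc x"
    then show "x \<in> cyc (x ^^ j)" unfolding cyc_def by (metis funpow_one rangeI)
  qed
  also have "\<dots> \<longleftrightarrow> (\<exists>m. x = x ^^ (j * m))"
    unfolding cyc_def by (simp add: image_iff funpow_mult)
  also have "\<dots> \<longleftrightarrow> (\<exists>m. x ^^ (j * m) = x)"
    by (rule ex_cong1) auto
  also have "\<dots> \<longleftrightarrow> (\<exists>m. x ^^ (j * m) = x ^^ 1)"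
    by (simp only: funpow_one)
  also have "\<dots> \<longleftrightarrow> (\<exists>m. [j * m = Suc 0] (mod ?c))"
  proof (rule ex_cong1)
    fix m
    have "(x ^^ (j * m) = x ^^ 1) = (j * m mod ?c = 1 mod ?c)" by (rule cyc_props(4)[OF assms])
    then show "(x ^^ (j * m) = x ^^ 1) = [j * m = Suc 0] (mod ?c)" by (simp add: cong_def)
  qed
  also have "\<dots> \<longleftrightarrow> coprime j ?c" using coprime_iff_invertible_nat by simp
  finally show ?thesis .
qed

lemma card_gen:
  assumes "x permutes S" "finite S"
  shows "card {y. cyc y = cyc x} = totient (card (cyc x))"
proof -
  let ?c = "card (cyc x)"
  have c0: "?c > 0" using cyc_props(2)[OF assms] .
  have eq: "{y. cyc y = cyc x} = (\<lambda>j. x ^^ j) ` totatives ?c"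
  proof
    show "(\<lambda>j. x ^^ j) ` totatives ?c \<subseteq> {y. cyc y = cyc x}"
      using cyc_pow_eq_iff[OF assms] by (auto simp: totatives_def)
  next
    show "{y. cyc y = cyc x} \<subseteq> (\<lambda>j. x ^^ j) ` totatives ?c"
    proof
      fix y assume "y \<in> {y. cyc y = cyc x}"
      then have cy: "cyc y = cyc x" by simp
      have "y \<in> cyc y" unfolding cyc_def by (metis funpow_one rangeI)
      then obtain j where j: "y = x ^^ j" using cy unfolding cyc_def by auto
      define j' where "j' = (if j mod ?c = 0 then ?c else j mod ?c)"
      have "j' mod ?c = j mod ?c" unfolding j'_def by auto
      then have yj: "y = x ^^ j'" using j cyc_props(4)[OF assms] by simp
      have "j' \<in> {0<..?c}" unfolding j'_def using c0
        by (auto simp: less_imp_le)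
      moreover have "coprime j' ?c" using cy yj cyc_pow_eq_iff[OF assms] by simp
      ultimately show "y \<in> (\<lambda>j. x ^^ j) ` totatives ?c" using yj
        unfolding totatives_def by auto
    qed
  qed
  have inj: "inj_on (\<lambda>j. x ^^ j) (totatives ?c)"
  proof
    fix a b assume ab: "a \<in> totatives ?c" "b \<in> totatives ?c" "x ^^ a = x ^^ b"
    then have m: "a mod ?c = b mod ?c" using cyc_props(4)[OF assms] by simp
    have "a \<in> {0<..?c}" "b \<in> {0<..?c}" using ab(1,2) unfolding totatives_def by auto
    then show "a = b" using m
      by (metis greaterThanAtMost_iff le_neq_implies_less mod_less mod_self
          neq0_conv mod_less_divisor c0 dual_order.refl)
  qed
  show ?thesis unfolding eq card_image[OF inj] totient_def ..
qed



lemma orb_self: "i \<in> orb p i"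
  unfolding orb_def by (metis funpow_0 rangeI)

lemma orb_subset_of_mem: "x \<in> orb p i \<Longrightarrow> orb p x \<subseteq> orb p i"
proof
  assume "x \<in> orb p i"
  then obtain k where k: "x = (p ^^ k) i" unfolding orb_def by auto
  fix y assume "y \<in> orb p x"
  then obtain m where "y = (p ^^ m) x" unfolding orb_def by auto
  then have "y = (p ^^ (m + k)) i" using k by (simp add: funpow_add)
  then show "y \<in> orb p i" unfolding orb_def by blast
qed

lemma funpow_id': "(id::'a\<Rightarrow>'a) ^^ k = id"
  by (induction k) auto

lemma orb_eq_of_mem:
  assumes "p permutes S" "finite S" "x \<in> orb p i"
  shows "orb p x = orb p i"
proof -
  obtain N where N: "N > 0" "p ^^ N = id" using perm_finite_order[OF assms(1,2)] by blast
  obtain k where k: "x = (p ^^ k) i" using assms(3) unfolding orb_def by auto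
  have "k \<le> N * k" using N(1) by simp
  then have kk: "N * k - k + k = N * k" by arith
  have "(p ^^ (N * k - k)) x = (p ^^ (N * k - k + k)) i"
    by (simp only: k funpow_add comp_apply)
  also have "\<dots> = (p ^^ (N * k)) i" using kk by simp
  also have "p ^^ (N * k) = (p ^^ N) ^^ k" by (simp only: funpow_mult)
  also have "\<dots> = id" using N(2) by (simp add: funpow_id')
  finally have "i \<in> orb p x" unfolding orb_def by (metis id_apply rangeI)
  then show ?thesis using orb_subset_of_mem assms(3) by blast
qed

lemma orb_in_S:
  assumes "p permutes S" "i \<in> S" shows "orb p i \<subseteq> S"
  unfolding orb_def using permutes_in_image[OF permutes_funpow[OF assms(1)]] assms(2) by auto

lemma mset_set_UNION_image:
  assumes "finite I" "\<And>i. i \<in> I \<Longrightarrow> finite (F i)"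
    "\<And>i j. i \<in> I \<Longrightarrow> j \<in> I \<Longrightarrow> i \<noteq> j \<Longrightarrow> F i \<inter> F j = {}"
  shows "image_mset g (mset_set (\<Union>i\<in>I. F i)) = (\<Sum>i\<in>I. image_mset g (mset_set (F i)))"
  using assms
proof (induction I rule: finite_induct)
  case empty then show ?case by simp
next
  case (insert a I)
  have "(\<Union>i\<in>insert a I. F i) = F a \<union> (\<Union>i\<in>I. F i)" by auto
  moreover have "F a \<inter> (\<Union>i\<in>I. F i) = {}" using insert by blast
  moreover have "finite (\<Union>i\<in>I. F i)" using insert by auto
  ultimately have "mset_set (\<Union>i\<in>insert a I. F i) = mset_set (F a) + mset_set (\<Union>i\<in>I. F i)"
    using insert(4) mset_set_Union[of "F a" "\<Union>i\<in>I. F i"] by simp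
  then show ?case using insert by simp
qed

lemma dvd_mult_gcd_iff:
  fixes L a b :: nat
  assumes "L > 0"
  shows "L dvd a * b \<longleftrightarrow> L div gcd a L dvd b"
proof -
  have g: "gcd a L \<noteq> 0" using assms by simp
  obtain a' L' where aL: "a = a' * gcd a L" "L = L' * gcd a L" "coprime a' L'"
    using gcd_coprime_exists[OF g] by blast
  have LL: "L div gcd a L = L'" using aL(2) g by (metis nonzero_mult_div_cancel_right)
  have "L dvd a * b \<longleftrightarrow> L' * gcd a L dvd (a' * b) * gcd a L"
    using aL by (metis mult.assoc mult.commute)
  also have "\<dots> \<longleftrightarrow> L' dvd a' * b" using g by simp
  also have "\<dots> \<longleftrightarrow> L' dvd b" using aL(3) by (simp add: coprime_commute coprime_dvd_mult_right_iff)
  finally show ?thesis using LL by simp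
qed



lemma orb_pow_subset: "orb (p ^^ a) y \<subseteq> orb p y"
  unfolding orb_def by (auto simp: funpow_mult)

lemma ptype_pow:
  assumes p: "p permutes {1..n}"
  shows "ptype_of n (p ^^ a) = type_pow (ptype_of n p) a"
proof -
  define S where "S = {1..n::nat}"
  define q where "q = p ^^ a"
  have pS: "p permutes S" using p S_def by simp
  have qS: "q permutes S" unfolding q_def using permutes_funpow[OF pS] .
  have finS: "finite S" unfolding S_def by simp
  define Orbs where "Orbs = orb p ` S"
  define F where "F Ob = orb q ` Ob" for Ob
  define h where "h m = replicate_mset (gcd a m) (m div gcd a m)" for m
  have finO: "finite Orbs" unfolding Orbs_def using finS by simp
  have OS: "Ob \<subseteq> S" if "Ob \<in> Orbs" for Ob using that orb_in_S[OF pS] unfolding Orbs_def by auto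
  have finF: "finite (F Ob)" if "Ob \<in> Orbs" for Ob
    unfolding F_def using OS[OF that] finS finite_subset by blast
  have U: "orb q ` S = (\<Union>Ob\<in>Orbs. F Ob)"
  proof
    show "orb q ` S \<subseteq> (\<Union>Ob\<in>Orbs. F Ob)"
    proof
      fix Y assume "Y \<in> orb q ` S"
      then obtain x where x: "x \<in> S" "Y = orb q x" by auto
      then have "orb p x \<in> Orbs" "x \<in> orb p x" using orb_self unfolding Orbs_def by auto
      then show "Y \<in> (\<Union>Ob\<in>Orbs. F Ob)" using x unfolding F_def by auto
    qed
    show "(\<Union>Ob\<in>Orbs. F Ob) \<subseteq> orb q ` S" using OS unfolding F_def by auto
  qed
  have orbq_sub: "orb q y \<subseteq> orb p y" for y unfolding q_def by (rule orb_pow_subset)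
  have disj: "F O1 \<inter> F O2 = {}" if th: "O1 \<in> Orbs" "O2 \<in> Orbs" "O1 \<noteq> O2" for O1 O2
  proof (rule ccontr)
    assume "F O1 \<inter> F O2 \<noteq> {}"
    then obtain x y where xy: "x \<in> O1" "y \<in> O2" "orb q x = orb q y" unfolding F_def by auto
    obtain i j where ij: "O1 = orb p i" "O2 = orb p j" using th unfolding Orbs_def by auto
    have "x \<in> orb p y" using xy(3) orb_self[of x q] orbq_sub[of y] by auto
    then have "x \<in> O2" using orb_eq_of_mem[OF pS finS, of y j] xy(2) ij by auto
    then have "orb p x = O2" "orb p x = O1"
      using orb_eq_of_mem[OF pS finS, of x j] orb_eq_of_mem[OF pS finS, of x i] xy(1) ij by auto
    then show False using th by simp
  qed
  have lhs: "ptype_of n (p ^^ a) = (\<Sum>Ob\<in>Orbs. image_mset card (mset_set (F Ob)))"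
    unfolding ptype_of_def S_def[symmetric] q_def[symmetric] U
    by (rule mset_set_UNION_image[OF finO finF disj])
  have per: "image_mset card (mset_set (F Ob)) = h (card Ob)" if Ob: "Ob \<in> Orbs" for Ob
  proof -
    obtain i where i: "i \<in> S" "Ob = orb p i" using Ob unfolding Orbs_def by auto
    define L where "L = card Ob"
    define g where "g = gcd a L"
    have L0: "L > 0" unfolding L_def i(2) using orb_props(2)[OF pS finS] .
    have cardY: "card (orb q y) = L div g" if y: "y \<in> Ob" for y
    proof -
      have oy: "orb p y = Ob" using orb_eq_of_mem[OF pS finS] y i by auto
      have "card (orb q y) dvd k \<longleftrightarrow> L div g dvd k" for k
      proof -
        have "card (orb q y) dvd k \<longleftrightarrow> (q ^^ k) y = y" using orb_dvd_iff[OF qS finS] by simp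
        also have "\<dots> \<longleftrightarrow> (p ^^ (a * k)) y = y" unfolding q_def by (simp add: funpow_mult)
        also have "\<dots> \<longleftrightarrow> L dvd a * k" using orb_dvd_iff[OF pS finS] oy L_def by simp
        also have "\<dots> \<longleftrightarrow> L div g dvd k" unfolding g_def using dvd_mult_gcd_iff[OF L0] .
        finally show ?thesis .
      qed
      then show ?thesis by (meson dvd_antisym dvd_refl)
    qed
    have img: "image_mset card (mset_set (F Ob)) = image_mset (\<lambda>_. L div g) (mset_set (F Ob))"
    proof (rule image_mset_cong)
      fix Y assume "Y \<in># mset_set (F Ob)"
      then have "Y \<in> F Ob" using finF[OF Ob] by simp
      then obtain y where "y \<in> Ob" "Y = orb q y" unfolding F_def by auto
      then show "card Y = L div g" using cardY by simp
    qed
    have UO: "\<Union>(F Ob) = Ob"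
    proof
      show "\<Union>(F Ob) \<subseteq> Ob"
      proof
        fix z assume "z \<in> \<Union>(F Ob)"
        then obtain y where y: "y \<in> Ob" "z \<in> orb q y" unfolding F_def by auto
        then show "z \<in> Ob" using orbq_sub[of y] orb_eq_of_mem[OF pS finS, of y i] i by auto
      qed
      show "Ob \<subseteq> \<Union>(F Ob)" unfolding F_def using orb_self by auto
    qed
    have part: "(L div g) * card (F Ob) = card (\<Union>(F Ob))"
    proof (rule card_partition)
      show "finite (F Ob)" using finF[OF Ob] .
      show "finite (\<Union>(F Ob))" using UO OS[OF Ob] finS finite_subset by metis
      show "card c = L div g" if "c \<in> F Ob" for c using that unfolding F_def using cardY by auto
      show "c1 \<inter> c2 = {}" if c: "c1 \<in> F Ob" "c2 \<in> F Ob" "c1 \<noteq> c2" for c1 c2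
        proof (rule ccontr)
          assume "c1 \<inter> c2 \<noteq> {}"
          then obtain z where z: "z \<in> c1" "z \<in> c2" by auto
          obtain y1 y2 where yy: "c1 = orb q y1" "c2 = orb q y2" using c unfolding F_def by auto
          then have "orb q z = c1" "orb q z = c2"
            using orb_eq_of_mem[OF qS finS, of z y1] orb_eq_of_mem[OF qS finS, of z y2] z by auto
          then show False using c by simp
        qed
    qed
    have gdvd: "g dvd L" unfolding g_def by simp
    have g0: "g > 0" unfolding g_def using L0 by simp
    have "L = (L div g) * g" using gdvd by simp
    moreover have "L div g > 0" using gdvd L0 g0 by (metis dvd_div_eq_0_iff neq0_conv less_not_refl2)
    ultimately have cF: "card (F Ob) = g" using part UO L_def
      by (metis mult_left_cancel neq0_conv)
    show ?thesis unfolding img image_mset_const_eq h_def L_def[symmetric] g_def[symmetric]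
      using cF by simp
  qed
  have rhs: "type_pow (ptype_of n p) a = (\<Sum>Ob\<in>Orbs. h (card Ob))"
    unfolding type_pow_def ptype_of_def S_def[symmetric] Orbs_def[symmetric] h_def[symmetric]
    by (simp add: sum_unfold_sum_mset multiset.map_comp comp_def)
  show ?thesis unfolding lhs rhs using per by (rule sum.cong[OF refl])
qed



lemma mset_bij:
  assumes "finite A" "finite B" "image_mset f (mset_set A) = image_mset g (mset_set B)"
  shows "\<exists>h. bij_betw h A B \<and> (\<forall>a\<in>A. g (h a) = f a)"
  using assms
proof (induction A arbitrary: B rule: finite_induct)
  case empty
  then have "B = {}" by (simp add: mset_set_empty_iff)
  then show ?case by (intro exI[of _ "\<lambda>_. undefined"]) (simp add: bij_betw_def)
next
  case (insert a A)
  have eq: "add_mset (f a) (image_mset f (mset_set A)) = image_mset g (mset_set B)"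
    using insert by simp
  then have "f a \<in># image_mset g (mset_set B)" by (metis union_single_eq_member)
  then have "f a \<in> g ` B" using insert.prems(1) by simp
  then obtain b where b: "b \<in> B" "g b = f a" by auto
  have "mset_set B = add_mset b (mset_set (B - {b}))"
    using mset_set.remove[OF insert.prems(1) b(1)] .
  then have "image_mset f (mset_set A) = image_mset g (mset_set (B - {b}))"
    using eq b by simp
  then obtain h where h: "bij_betw h A (B - {b})" "\<forall>a\<in>A. g (h a) = f a"
    using insert.IH[of "B - {b}"] insert.prems(1) by auto
  define h' where "h' = h(a := b)"
  have "bij_betw h' A (B - {b})" unfolding h'_def using h(1) insert.hyps(2)
    by (metis bij_betw_cong fun_upd_other)
  then have "bij_betw h' (A \<union> {a}) ((B - {b}) \<union> {h' a})"
    using notIn_Un_bij_betw3[of a A h' "B - {b}"] insert.hyps(2) unfolding h'_def by simp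
  moreover have "A \<union> {a} = insert a A" "(B - {b}) \<union> {h' a} = B" using b(1) unfolding h'_def by auto
  ultimately have "bij_betw h' (insert a A) B" by simp
  moreover have "\<forall>x\<in>insert a A. g (h' x) = f x"
    using h(2) b(2) insert.hyps(2) unfolding h'_def by auto
  ultimately show ?case by blast
qed



lemma conj_same_type:
  assumes p: "p permutes {1..n}" and q: "q permutes {1..n}" and t: "ptype_of n p = ptype_of n q"
  shows "\<exists>\<sigma>. \<sigma> permutes {1..n} \<and> inv' \<sigma> \<circ> p \<circ> \<sigma> = q"
proof -
  define S where "S = {1..n::nat}"
  have pS: "p permutes S" and qS: "q permutes S" using p q S_def by auto
  have finS: "finite S" unfolding S_def by simp
  define Oq where "Oq = orb q ` S"
  define Op where "Op = orb p ` S"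
  have "image_mset card (mset_set Oq) = image_mset card (mset_set Op)"
    using t unfolding ptype_of_def Oq_def Op_def S_def by simp
  then obtain H where H: "bij_betw H Oq Op" "\<forall>Ob\<in>Oq. card (H Ob) = card Ob"
    using mset_bij[of Oq Op card card] finS unfolding Oq_def Op_def by auto
  define r where "r Ob = (SOME x. x \<in> Ob)" for Ob :: "nat set"
  define rp where "rp Ob = (SOME x. x \<in> H Ob)" for Ob
  have r_in: "r Ob \<in> Ob" "orb q (r Ob) = Ob" if Obq: "Ob \<in> Oq" for Ob
  proof -
    obtain i where i: "Ob = orb q i" using Obq unfolding Oq_def by auto
    then show r1: "r Ob \<in> Ob" unfolding r_def using orb_self by (metis someI)
    show "orb q (r Ob) = Ob" using orb_eq_of_mem[OF qS finS] r1 i by auto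
  qed
  have rp_in: "rp Ob \<in> H Ob" "orb p (rp Ob) = H Ob" if Obq: "Ob \<in> Oq" for Ob
  proof -
    have "H Ob \<in> Op" using H(1) Obq by (auto simp: bij_betw_def)
    then obtain i where i: "H Ob = orb p i" unfolding Op_def by auto
    then show r1: "rp Ob \<in> H Ob" unfolding rp_def using orb_self by (metis someI)
    show "orb p (rp Ob) = H Ob" using orb_eq_of_mem[OF pS finS] r1 i by auto
  qed
  have HS: "H Ob \<subseteq> S" if "Ob \<in> Oq" for Ob
  proof -
    have "H Ob \<in> Op" using H(1) that by (auto simp: bij_betw_def)
    then show ?thesis unfolding Op_def using orb_in_S[OF pS] by auto
  qed
  have OqI: "orb q x \<in> Oq" if "x \<in> S" for x using that unfolding Oq_def by auto
  define mm where "mm x = (SOME m. (q ^^ m) (r (orb q x)) = x)" for x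
  define \<sigma> where "\<sigma> x = (if x \<in> S then (p ^^ mm x) (rp (orb q x)) else x)" for x
  have mm: "(q ^^ mm x) (r (orb q x)) = x" if "x \<in> S" for x
  proof -
    have "x \<in> orb q (r (orb q x))" using r_in(2)[OF OqI[OF that]] orb_self by simp
    then obtain m where "(q ^^ m) (r (orb q x)) = x" unfolding orb_def image_iff by (metis UNIV_I)
    then show ?thesis unfolding mm_def by (rule someI)
  qed
  have wd: "\<sigma> x = (p ^^ k) (rp (orb q x))" if x: "x \<in> S" and k: "(q ^^ k) (r (orb q x)) = x" for x k
  proof -
    let ?Ob = "orb q x"
    have Ob: "?Ob \<in> Oq" using OqI[OF x] .
    have "(q ^^ mm x) (r ?Ob) = (q ^^ k) (r ?Ob)" using mm[OF x] k by simp
    then have "mm x mod card (orb q (r ?Ob)) = k mod card (orb q (r ?Ob))"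
      using orb_props(3)[OF qS finS] by blast
    then have "mm x mod card (orb p (rp ?Ob)) = k mod card (orb p (rp ?Ob))"
      using r_in(2)[OF Ob] rp_in(2)[OF Ob] H(2) Ob by simp
    then have "(p ^^ mm x) (rp ?Ob) = (p ^^ k) (rp ?Ob)"
      using orb_props(3)[OF pS finS] by blast
    then show ?thesis unfolding \<sigma>_def using x by simp
  qed
  have qx_orb: "orb q (q x) = orb q x" for x
  proof -
    have "q x \<in> orb q x" unfolding orb_def by (metis funpow_one rangeI)
    then show ?thesis using orb_eq_of_mem[OF qS finS] by blast
  qed
  have comm: "\<sigma> (q x) = p (\<sigma> x)" if x: "x \<in> S" for x
  proof -
    have qxS: "q x \<in> S" using x permutes_in_image[OF qS] by simp
    have "(q ^^ Suc (mm x)) (r (orb q (q x))) = q x" using mm[OF x] qx_orb by simp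
    then have "\<sigma> (q x) = (p ^^ Suc (mm x)) (rp (orb q (q x)))" by (rule wd[OF qxS])
    also have "\<dots> = p (\<sigma> x)" using x qx_orb unfolding \<sigma>_def by simp
    finally show ?thesis .
  qed
  have \<sigma>_in: "\<sigma> x \<in> H (orb q x)" if x: "x \<in> S" for x
  proof -
    have "\<sigma> x \<in> orb p (rp (orb q x))" unfolding \<sigma>_def orb_def using x by auto
    then show ?thesis using rp_in(2)[OF OqI[OF x]] by simp
  qed
  have \<sigma>S: "\<sigma> ` S \<subseteq> S" using \<sigma>_in HS OqI by blast
  have inj: "inj_on \<sigma> S"
  proof
    fix x y assume xy: "x \<in> S" "y \<in> S" "\<sigma> x = \<sigma> y"
    have sameO: "orb q x = orb q y"
    proof (rule ccontr)
      assume ne: "orb q x \<noteq> orb q y"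
      then have ne': "H (orb q x) \<noteq> H (orb q y)" using H(1) OqI xy
        by (metis bij_betw_inv_into_left)
      have "\<sigma> x \<in> H (orb q x)" "\<sigma> x \<in> H (orb q y)" using \<sigma>_in[OF xy(1)] \<sigma>_in[OF xy(2)] xy(3) by simp_all
      then have "orb p (\<sigma> x) = H (orb q x)" "orb p (\<sigma> x) = H (orb q y)"
        using rp_in(2)[OF OqI[OF xy(1)]] rp_in(2)[OF OqI[OF xy(2)]]
          orb_eq_of_mem[OF pS finS, of "\<sigma> x" "rp (orb q x)"]
          orb_eq_of_mem[OF pS finS, of "\<sigma> x" "rp (orb q y)"] by auto
      then show False using ne' by simp
    qed
    let ?Ob = "orb q x"
    have Ob: "?Ob \<in> Oq" using OqI[OF xy(1)] .
    have my: "(q ^^ mm y) (r ?Ob) = y" using mm[OF xy(2)] sameO by simp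
    have "(p ^^ mm x) (rp ?Ob) = (p ^^ mm y) (rp ?Ob)"
      using xy(3) wd[OF xy(2) mm[OF xy(2)]] sameO xy unfolding \<sigma>_def by simp
    then have "mm x mod card (orb p (rp ?Ob)) = mm y mod card (orb p (rp ?Ob))"
      using orb_props(3)[OF pS finS] by blast
    then have "mm x mod card (orb q (r ?Ob)) = mm y mod card (orb q (r ?Ob))"
      using r_in(2)[OF Ob] rp_in(2)[OF Ob] H(2) Ob by simp
    then have "(q ^^ mm x) (r ?Ob) = (q ^^ mm y) (r ?Ob)"
      using orb_props(3)[OF qS finS] by blast
    then show "x = y" using mm[OF xy(1)] my by simp
  qed
  have bij: "bij_betw \<sigma> S S" unfolding bij_betw_def using inj endo_inj_surj[OF finS \<sigma>S inj] by simp
  have perm: "\<sigma> permutes S" by (rule bij_imp_permutes[OF bij]) (simp add: \<sigma>_def)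
  have "inv' \<sigma> \<circ> p \<circ> \<sigma> = q"
  proof
    fix x
    show "(inv' \<sigma> \<circ> p \<circ> \<sigma>) x = q x"
    proof (cases "x \<in> S")
      case True
      then have "p (\<sigma> x) = \<sigma> (q x)" using comm by simp
      then show ?thesis using permutes_inverses(2)[OF perm] by simp
    next
      case False
      then have "\<sigma> x = x" "p x = x" "q x = x" using permutes_not_in[OF pS] permutes_not_in[OF qS]
        unfolding \<sigma>_def by auto
      then show ?thesis using permutes_inverses(2)[OF perm, of x] by simp
    qed
  qed
  then show ?thesis using perm S_def by auto
qed



locale PG =
  fixes n :: nat and G :: "perm set"
  assumes sg: "subgroup G (sym_group n)"
begin

lemma G_perm: "g \<in> G \<Longrightarrow> g permutes {1..n}"
  using subgroup.subset[OF sg] by (auto simp: sym_group_carrier)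

lemma id_in: "id \<in> G"
  using subgroup.one_closed[OF sg] by (simp add: sym_group_one)

lemma comp_in: "g \<in> G \<Longrightarrow> h \<in> G \<Longrightarrow> g \<circ> h \<in> G"
  using subgroup.m_closed[OF sg] by (simp add: sym_group_mult)

lemma pow_in: "g \<in> G \<Longrightarrow> g ^^ m \<in> G"
  by (induction m) (auto simp: id_in comp_in)

lemma finG: "finite G"
  using finite_permutations[of "{1..n}"] G_perm by (metis finite_atLeastAtMost mem_Collect_eq rev_finite_subset subsetI)

lemma cyc_sub: "g \<in> G \<Longrightarrow> cyc g \<subseteq> G"
  unfolding cyc_def using pow_in by auto

lemma self_cyc: "g \<in> cyc g"
  unfolding cyc_def by (metis funpow_one rangeI)

lemma cls_eq: "g \<in> G \<Longrightarrow> cls G g = {y. cyc y = cyc g}"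
  unfolding cls_def using cyc_sub self_cyc by blast

lemma card_cls: "g \<in> G \<Longrightarrow> card (cls G g) = totient (type_order (ptype_of n g))"
  using cls_eq card_gen[OF G_perm] type_order_ptype[OF G_perm] by simp

lemma cyc_id: "cyc id = {id}"
  unfolding cyc_def by (auto simp: funpow_id')

lemma type_order_id: "type_order (ptype_of n id) = 1"
proof -
  have "id permutes {1..n}" by (rule permutes_id)
  from type_order_ptype[OF this] show ?thesis using cyc_id by simp
qed

lemma type_order_nonid: assumes "g \<in> G" "g \<noteq> id" shows "type_order (ptype_of n g) \<noteq> 1"
proof -
  have "id \<in> cyc g" unfolding cyc_def by (rule range_eqI[where x=0]) simp
  moreover have "g \<in> cyc g" by (rule self_cyc)
  moreover have "finite (cyc g)" using cyc_props(1)[OF G_perm[OF assms(1)]] by simp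
  ultimately have sub: "{id, g} \<subseteq> cyc g" by simp
  have "card {id, g} = 2" using assms(2) by simp
  then have "card (cyc g) \<ge> 2" using card_mono[OF \<open>finite (cyc g)\<close> sub] by simp
  then show ?thesis using type_order_ptype[OF G_perm[OF assms(1)]] by simp
qed

lemma type_nonid: "g \<in> G \<Longrightarrow> g \<noteq> id \<Longrightarrow> ptype_of n g \<noteq> ptype_of n id"
  using type_order_nonid type_order_id by metis

lemma type_in_types0: assumes "g \<in> G" shows "ptype_of n g \<in> types0 n G \<longleftrightarrow> g \<noteq> id"
proof
  assume "ptype_of n g \<in> types0 n G"
  then obtain h where h0: "h \<in> G0 G" "ptype_of n g = ptype_of n h"
    unfolding types0_def by (rule imageE)
  then have h: "h \<in> G" "h \<noteq> id" "ptype_of n h = ptype_of n g" unfolding G0_def by auto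
  show "g \<noteq> id"
  proof
    assume "g = id" then show False using type_nonid[OF h(1,2)] h(3) by simp
  qed
next
  assume "g \<noteq> id" then show "ptype_of n g \<in> types0 n G"
    using assms unfolding types0_def G0_def by auto
qed

lemma cls_type: "x \<in> cls G g \<Longrightarrow> ptype_of n x = ptype_of n g"
  unfolding cls_def by (rule ptype_cyc) simp

lemma cls_self: "g \<in> G \<Longrightarrow> g \<in> cls G g"
  unfolding cls_def by auto

lemma cls_of_mem: "x \<in> cls G g \<Longrightarrow> cls G x = cls G g"
  unfolding cls_def by simp

lemma cls_sub: "cls G g \<subseteq> G" unfolding cls_def by auto

end



lemma conn_memD: "(x, y) \<in> conn_rel V E \<Longrightarrow> x \<in> V \<and> y \<in> V"
  unfolding conn_rel_def by auto

lemma conn_refl: "x \<in> V \<Longrightarrow> (x, x) \<in> conn_rel V E"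
  unfolding conn_rel_def by auto

lemma conn_edge: "x \<in> V \<Longrightarrow> y \<in> V \<Longrightarrow> E x y \<Longrightarrow> (x, y) \<in> conn_rel V E"
  unfolding conn_rel_def by auto

lemma conn_trans: "(x, y) \<in> conn_rel V E \<Longrightarrow> (y, z) \<in> conn_rel V E \<Longrightarrow> (x, z) \<in> conn_rel V E"
  unfolding conn_rel_def by (simp, meson rtrancl_trans)

lemma conn_sym:
  assumes sym: "\<And>a b. E a b \<Longrightarrow> E b a" and xy: "(x, y) \<in> conn_rel V E"
  shows "(y, x) \<in> conn_rel V E"
proof -
  let ?R = "{(a, b). a \<in> V \<and> b \<in> V \<and> E a b}"
  have R: "?R\<inverse> \<subseteq> ?R"
  proof
    fix p assume "p \<in> ?R\<inverse>"
    then obtain a b where "p = (a, b)" "a \<in> V" "b \<in> V" "E b a" by auto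
    then show "p \<in> ?R" using sym[of b a] by simp
  qed
  have "(x, y) \<in> ?R\<^sup>*" using xy unfolding conn_rel_def by auto
  then have "(y, x) \<in> (?R\<inverse>)\<^sup>*" by (simp add: rtrancl_converse)
  then have "(y, x) \<in> ?R\<^sup>*" using rtrancl_mono[OF R] by blast
  then show ?thesis using xy unfolding conn_rel_def by simp
qed

lemma equiv_conn:
  assumes sym: "\<And>a b. E a b \<Longrightarrow> E b a"
  shows "equiv V (conn_rel V E)"
proof (rule equivI)
  show "conn_rel V E \<subseteq> V \<times> V" unfolding conn_rel_def by auto
  show "refl_on V (conn_rel V E)" by (rule refl_onI) (rule conn_refl)
  show "sym (conn_rel V E)" by (rule symI) (rule conn_sym[OF sym])
  show "trans (conn_rel V E)" by (rule transI) (rule conn_trans)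
qed

lemma conn_induct[consumes 1, case_names refl step]:
  assumes "(x, y) \<in> conn_rel V E"
    and "P x"
    and "\<And>y z. (x, y) \<in> conn_rel V E \<Longrightarrow> y \<in> V \<Longrightarrow> z \<in> V \<Longrightarrow> E y z \<Longrightarrow> P y \<Longrightarrow> P z"
  shows "P y"
proof -
  let ?R = "{(a, b). a \<in> V \<and> b \<in> V \<and> E a b}"
  have x: "x \<in> V" using assms(1) unfolding conn_rel_def by auto
  have "(x, y) \<in> ?R\<^sup>*" using assms(1) unfolding conn_rel_def by auto
  then show ?thesis
  proof (induction rule: rtrancl_induct)
    case base then show ?case using assms(2) by simp
  next
    case (step y z)
    have yz: "y \<in> V" "z \<in> V" "E y z" using step(2) by auto
    have "(x, y) \<in> conn_rel V E" using step(1) x yz(1) unfolding conn_rel_def by simp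
    then show ?case using step(3) yz assms(3) by blast
  qed
qed

lemma card_components_map:
  assumes symE: "\<And>a b. E a b \<Longrightarrow> E b a" and symF: "\<And>a b. F a b \<Longrightarrow> F b a"
    and surj: "f ` V = Q"
    and i: "\<And>x y. x \<in> V \<Longrightarrow> y \<in> V \<Longrightarrow> E x y \<Longrightarrow> f x = f y \<or> F (f x) (f y)"
    and ii: "\<And>X Y. X \<in> Q \<Longrightarrow> Y \<in> Q \<Longrightarrow> F X Y \<Longrightarrow>
               \<exists>x y. x \<in> V \<and> y \<in> V \<and> f x = X \<and> f y = Y \<and> (x, y) \<in> conn_rel V E"
    and iii: "\<And>x y. x \<in> V \<Longrightarrow> y \<in> V \<Longrightarrow> f x = f y \<Longrightarrow> (x, y) \<in> conn_rel V E"
  shows "card (components V E) = card (components Q F)"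
proof -
  have fQ: "x \<in> V \<Longrightarrow> f x \<in> Q" for x using surj by blast
  have fw: "(f x, f y) \<in> conn_rel Q F" if xy: "(x, y) \<in> conn_rel V E" for x y
  proof -
    have xV: "x \<in> V" using conn_memD[OF xy] by simp
    from xy show ?thesis
    proof (induction rule: conn_induct)
      case refl show ?case by (rule conn_refl[OF fQ[OF xV]])
    next
      case (step y z)
      have "(f y, f z) \<in> conn_rel Q F"
      proof (cases "f y = f z")
        case True then show ?thesis using conn_refl[OF fQ[OF step(2)]] by simp
      next
        case False
        then have "F (f y) (f z)" using i[OF step(2,3,4)] by simp
        then show ?thesis by (rule conn_edge[OF fQ[OF step(2)] fQ[OF step(3)]])
      qed
      with step(5) show ?case by (rule conn_trans)
    qed
  qed
  have bw: "(x, y) \<in> conn_rel V E" if that1: "(f x, f y) \<in> conn_rel Q F" "x \<in> V" "y \<in> V" for x y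
  proof -
    have "\<forall>y\<in>V. f y = Y \<longrightarrow> (x, y) \<in> conn_rel V E" if fY: "(f x, Y) \<in> conn_rel Q F" for Y
      using fY
    proof (induction rule: conn_induct)
      case refl show ?case
      proof (intro ballI impI)
        fix y assume "y \<in> V" "f y = f x"
        then show "(x, y) \<in> conn_rel V E" using iii[OF that1(2), of y] by simp
      qed
    next
      case (step Y Z)
      obtain y' z' where yz: "y' \<in> V" "z' \<in> V" "f y' = Y" "f z' = Z" "(y', z') \<in> conn_rel V E"
        using ii[OF step(2,3,4)] by blast
      have "(x, y') \<in> conn_rel V E" using step(5) yz(1,3) by blast
      then have xz: "(x, z') \<in> conn_rel V E" using yz(5) by (rule conn_trans)
      show ?case
      proof (intro ballI impI)
        fix y assume y: "y \<in> V" "f y = Z"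
        have "(z', y) \<in> conn_rel V E" using iii[OF yz(2) y(1)] yz(4) y(2) by simp
        with xz show "(x, y) \<in> conn_rel V E" by (rule conn_trans)
      qed
    qed
    then show ?thesis using that1 by blast
  qed
  let ?cV = "conn_rel V E" and ?cQ = "conn_rel Q F"
  have eV: "equiv V ?cV" using equiv_conn[OF symE] .
  have eQ: "equiv Q ?cQ" using equiv_conn[OF symF] .
  have img: "f ` (?cV `` {x}) = ?cQ `` {f x}" if x: "x \<in> V" for x
  proof
    show "f ` (?cV `` {x}) \<subseteq> ?cQ `` {f x}"
    proof
      fix Y assume "Y \<in> f ` (?cV `` {x})"
      then obtain y where "(x, y) \<in> ?cV" "Y = f y" by blast
      then show "Y \<in> ?cQ `` {f x}" using fw by blast
    qed
    show "?cQ `` {f x} \<subseteq> f ` (?cV `` {x})"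
    proof
      fix Y assume "Y \<in> ?cQ `` {f x}"
      then have Y: "(f x, Y) \<in> ?cQ" by simp
      then have "Y \<in> Q" using conn_memD[OF Y] by simp
      then have "Y \<in> f ` V" using surj by simp
      then obtain y where y: "y \<in> V" "f y = Y" by blast
      have "(f x, f y) \<in> ?cQ" using Y y(2) by simp
      then have "(x, y) \<in> ?cV" using bw x y(1) by blast
      then show "Y \<in> f ` (?cV `` {x})" using y by auto
    qed
  qed
  have "bij_betw (\<lambda>K. f ` K) (V // ?cV) (Q // ?cQ)"
  proof (rule bij_betw_imageI)
    show "inj_on (\<lambda>K. f ` K) (V // ?cV)"
    proof
      fix K1 K2 assume K: "K1 \<in> V // ?cV" "K2 \<in> V // ?cV" "f ` K1 = f ` K2"
      obtain x where x: "x \<in> V" "K1 = ?cV `` {x}" using K(1) by (auto elim: quotientE)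
      obtain y where y: "y \<in> V" "K2 = ?cV `` {y}" using K(2) by (auto elim: quotientE)
      have "?cQ `` {f x} = ?cQ `` {f y}" using K(3) img x y by simp
      moreover have "f y \<in> ?cQ `` {f y}" using conn_refl fQ[OF y(1)] by auto
      ultimately have "f y \<in> ?cQ `` {f x}" by simp
      then have "(f x, f y) \<in> ?cQ" by simp
      then have "(x, y) \<in> ?cV" using bw x(1) y(1) by blast
      then show "K1 = K2" using x y equiv_class_eq[OF eV] by simp
    qed
    show "(\<lambda>K. f ` K) ` (V // ?cV) = Q // ?cQ"
    proof
      show "(\<lambda>K. f ` K) ` (V // ?cV) \<subseteq> Q // ?cQ"
      proof
        fix K' assume "K' \<in> (\<lambda>K. f ` K) ` (V // ?cV)"
        then obtain K where K: "K \<in> V // ?cV" "K' = f ` K" by blast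
        then obtain x where x: "x \<in> V" "K = ?cV `` {x}" by (auto elim: quotientE)
        then have "K' = ?cQ `` {f x}" using img K by simp
        then show "K' \<in> Q // ?cQ" using quotientI[OF fQ[OF x(1)]] by simp
      qed
      show "Q // ?cQ \<subseteq> (\<lambda>K. f ` K) ` (V // ?cV)"
      proof
        fix K assume "K \<in> Q // ?cQ"
        then obtain X where X: "X \<in> Q" "K = ?cQ `` {X}" by (auto elim: quotientE)
        have "X \<in> f ` V" using X(1) surj by simp
        then obtain x where x: "x \<in> V" "f x = X" by blast
        then have "K = f ` (?cV `` {x})" using img X by simp
        moreover have "?cV `` {x} \<in> V // ?cV" using quotientI[OF x(1)] .
        ultimately show "K \<in> (\<lambda>K. f ` K) ` (V // ?cV)" by blast
      qed
    qed
  qed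
  then show ?thesis unfolding components_def by (rule bij_betw_same_card)
qed



context PG begin

lemma cls_nonid: assumes "g \<in> G0 G" "x \<in> cls G g" shows "x \<in> G0 G"
proof -
  have xG: "x \<in> G" using assms(2) cls_sub by blast
  have cy: "cyc x = cyc g" using assms(2) unfolding cls_def by simp
  have "x \<noteq> id"
  proof
    assume "x = id"
    then have "cyc g = {id}" using cy cyc_id by simp
    then have "g = id" using self_cyc[of g] by simp
    then show False using assms(1) unfolding G0_def by simp
  qed
  then show ?thesis using xG unfolding G0_def by simp
qed

lemma qvert_cls: "X \<in> qvert G \<Longrightarrow> x \<in> X \<Longrightarrow> x \<in> G0 G \<and> cls G x = X"
  unfolding qvert_def using cls_nonid cls_of_mem by blast

lemma pow_adj_sym: "pow_adj a b \<Longrightarrow> pow_adj b a"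
  unfolding pow_adj_def by blast

lemma qadj_sym: "qadj a b \<Longrightarrow> qadj b a"
  unfolding qadj_def by blast

lemma c0_eq: "c0 G = card (components (qvert G) qadj)"
  unfolding c0_def
proof (rule card_components_map[where f = "cls G"])
  show "pow_adj a b \<Longrightarrow> pow_adj b a" for a b by (rule pow_adj_sym)
  show "qadj a b \<Longrightarrow> qadj b a" for a b by (rule qadj_sym)
  show "cls G ` G0 G = qvert G" unfolding qvert_def ..
  show "cls G x = cls G y \<or> qadj (cls G x) (cls G y)"
    if "x \<in> G0 G" "y \<in> G0 G" "pow_adj x y" for x y
  proof -
    have "x \<in> cls G x" "y \<in> cls G y" using that cls_self unfolding G0_def by auto
    then show ?thesis using that(3) unfolding qadj_def pow_adj_def by blast
  qed
  show "\<exists>x y. x \<in> G0 G \<and> y \<in> G0 G \<and> cls G x = X \<and> cls G y = Y \<and> (x, y) \<in> conn_rel (G0 G) pow_adj"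
    if XY: "X \<in> qvert G" "Y \<in> qvert G" "qadj X Y" for X Y
  proof -
    obtain x y m where xy: "x \<in> X" "y \<in> Y" "m > 0" "x = y ^^ m \<or> y = x ^^ m"
      using XY(3) unfolding qadj_def by blast
    have x: "x \<in> G0 G" "cls G x = X" using qvert_cls[OF XY(1) xy(1)] by auto
    have y: "y \<in> G0 G" "cls G y = Y" using qvert_cls[OF XY(2) xy(2)] by auto
    have "(x, y) \<in> conn_rel (G0 G) pow_adj"
    proof (cases "x = y")
      case True then show ?thesis using conn_refl x(1) by simp
    next
      case False
      then have "pow_adj x y" unfolding pow_adj_def using xy(3,4) by blast
      then show ?thesis using conn_edge x(1) y(1) by metis
    qed
    then show ?thesis using x y by blast
  qed
  show "(x, y) \<in> conn_rel (G0 G) pow_adj"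
    if xy: "x \<in> G0 G" "y \<in> G0 G" "cls G x = cls G y" for x y
  proof (cases "x = y")
    case True then show ?thesis using conn_refl xy(1) by simp
  next
    case False
    have xG: "x \<in> G" "y \<in> G" using xy unfolding G0_def by auto
    have "y \<in> cls G x" using xy(3) cls_self[OF xG(2)] by simp
    then have "cyc y = cyc x" unfolding cls_def by simp
    then have "y \<in> cyc x" using self_cyc[of y] by simp
    then obtain m where m: "y = x ^^ m" unfolding cyc_def by auto
    have "m \<noteq> 0" using m xy(2) unfolding G0_def by auto
    then have "pow_adj x y" unfolding pow_adj_def using m False by blast
    then show ?thesis using conn_edge xy(1,2) by metis
  qed
qed

end



definition cj :: "perm \<Rightarrow> perm \<Rightarrow> perm" where
  "cj y g = inv' y \<circ> g \<circ> y"

lemma cj_apply: "cj y g x = inv' y (g (y x))"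
  unfolding cj_def by simp

lemma cj_comp: assumes "y permutes S" shows "cj y (g \<circ> h) = cj y g \<circ> cj y h"
  unfolding cj_def fun_eq_iff using permutes_inverses(1)[OF assms] by simp

lemma cj_id: assumes "y permutes S" shows "cj y id = id"
  unfolding cj_def fun_eq_iff using permutes_inverses(2)[OF assms] by simp

lemma cj_pow: assumes "y permutes S" shows "cj y (g ^^ m) = (cj y g) ^^ m"
  by (induction m) (simp_all only: funpow.simps cj_id[OF assms] cj_comp[OF assms])

lemma cj_inv: assumes "y permutes S" shows "cj (inv' y) (cj y g) = g"
  unfolding cj_def fun_eq_iff using permutes_inverses[OF assms] permutes_inv_inv[OF assms] by simp

lemma cj_inj: assumes "y permutes S" shows "inj (cj y)"
  by (metis cj_inv[OF assms] injI)

lemma cyc_cj: assumes "y permutes S" shows "cyc (cj y g) = cj y ` cyc g"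
proof -
  have "cj y ` range (\<lambda>m. g ^^ m) = range (\<lambda>m. cj y (g ^^ m))" by (simp add: image_image)
  then show ?thesis unfolding cyc_def cj_pow[OF assms] by simp
qed

lemma orb_cj: assumes "y permutes S" shows "orb (cj y g) i = inv' y ` orb g (y i)"
proof -
  have "((cj y g) ^^ m) i = inv' y ((g ^^ m) (y i))" for m
    using cj_pow[OF assms, where g=g and m=m, symmetric] by (simp add: cj_apply)
  then have "range (\<lambda>m. ((cj y g) ^^ m) i) = range (\<lambda>m. inv' y ((g ^^ m) (y i)))" by simp
  also have "\<dots> = inv' y ` range (\<lambda>m. (g ^^ m) (y i))" by (simp add: image_image)
  finally show ?thesis unfolding orb_def .
qed

lemma ptype_cj:
  assumes y: "y permutes {1..n}"
  shows "ptype_of n (cj y g) = ptype_of n g"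
proof -
  let ?S = "{1..n::nat}"
  have injy: "inj (inv' y)" using permutes_inj[OF permutes_inv[OF y]] .
  have "orb (cj y g) ` ?S = (\<lambda>Ob. inv' y ` Ob) ` (orb g ` (y ` ?S))"
    using orb_cj[OF y] by (auto simp: image_iff)
  also have "y ` ?S = ?S" using permutes_image[OF y] .
  finally have eq: "orb (cj y g) ` ?S = (\<lambda>Ob. inv' y ` Ob) ` (orb g ` ?S)" .
  have inj: "inj_on (\<lambda>Ob. inv' y ` Ob) (orb g ` ?S)"
    using injy by (simp add: inj_on_def inj_image_eq_iff)
  have "image_mset card (mset_set (orb (cj y g) ` ?S))
      = image_mset card (image_mset (\<lambda>Ob. inv' y ` Ob) (mset_set (orb g ` ?S)))"
    unfolding eq image_mset_mset_set[OF inj] ..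
  also have "\<dots> = image_mset card (mset_set (orb g ` ?S))"
    unfolding multiset.map_comp
    by (rule image_mset_cong) (simp add: card_image inj_on_subset[OF injy])
  finally show ?thesis unfolding ptype_of_def .
qed

lemma normD: "y \<in> normalizer_S n G \<Longrightarrow> y permutes {1..n} \<and> cj y ` G = G"
  unfolding normalizer_S_def cj_def by auto

lemma norm_inv: assumes "y \<in> normalizer_S n G" shows "inv' y \<in> normalizer_S n G"
proof -
  have y: "y permutes {1..n}" "cj y ` G = G" using normD[OF assms] by auto
  have "cj (inv' y) ` G = cj (inv' y) ` (cj y ` G)" using y(2) by simp
  also have "\<dots> = G" using cj_inv[OF y(1)] by (simp add: image_image)
  finally show ?thesis unfolding normalizer_S_def cj_def[symmetric] using permutes_inv[OF y(1)] by simp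
qed

context PG begin

definition vt :: "perm set \<Rightarrow> ptype" where "vt X = ptype_of n (SOME x. x \<in> X)"

lemma vt_mem: assumes "X \<in> qvert G" "x \<in> X" shows "ptype_of n x = vt X"
proof -
  obtain g where g: "g \<in> G0 G" "X = cls G g" using assms(1) unfolding qvert_def by auto
  have "(SOME x. x \<in> X) \<in> X" using someI[of "\<lambda>x. x \<in> X" x] assms(2) by simp
  then show ?thesis unfolding vt_def using cls_type g assms(2) by metis
qed

lemma vt_cls: "g \<in> G0 G \<Longrightarrow> vt (cls G g) = ptype_of n g"
  using vt_mem[of "cls G g" g] cls_self unfolding qvert_def G0_def by auto

lemma qvert_ne: "X \<in> qvert G \<Longrightarrow> \<exists>x. x \<in> X"
  unfolding qvert_def G0_def using cls_self by blast

lemma vt_types0: assumes "X \<in> qvert G" shows "vt X \<in> types0 n G"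
proof -
  obtain x where x: "x \<in> X" using qvert_ne[OF assms] by blast
  then have "x \<in> G0 G" using qvert_cls[OF assms] by blast
  then show ?thesis using vt_mem[OF assms x] unfolding types0_def by (metis image_eqI)
qed

lemma kC_vt: "C \<subseteq> qvert G \<Longrightarrow> kC n C T = card {X \<in> C. vt X = T}"
  unfolding kC_def using vt_mem by (metis (no_types, lifting) qvert_ne subsetD)

lemma qadj_types: assumes "X \<in> qvert G" "Y \<in> qvert G" "qadj X Y"
  shows "vt X = vt Y \<or> type_adj (vt X) (vt Y)"
proof -
  obtain x y m where xy: "x \<in> X" "y \<in> Y" "m > 0" "x = y ^^ m \<or> y = x ^^ m"
    using assms(3) unfolding qadj_def by blast
  have G: "x \<in> G" "y \<in> G" using qvert_cls[OF assms(1) xy(1)] qvert_cls[OF assms(2) xy(2)]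
    unfolding G0_def by auto
  have "vt X = type_pow (vt Y) m \<or> vt Y = type_pow (vt X) m"
    using xy(4) ptype_pow[OF G_perm[OF G(1)]] ptype_pow[OF G_perm[OF G(2)]]
      vt_mem[OF assms(1) xy(1)] vt_mem[OF assms(2) xy(2)] by auto
  then show ?thesis unfolding type_adj_def using xy(3) by blast
qed

lemma cls_cj: assumes y: "y \<in> normalizer_S n G" and g: "g \<in> G"
  shows "cj y ` cls G g = cls G (cj y g)"
proof -
  have yp: "y permutes {1..n}" and yG: "cj y ` G = G" using normD[OF y] by auto
  have cg: "cj y g \<in> G" using g yG by blast
  have injc: "inj (cj y)" using cj_inj[OF yp] .
  show ?thesis unfolding cls_eq[OF g] cls_eq[OF cg]
  proof
    show "cj y ` {z. cyc z = cyc g} \<subseteq> {z. cyc z = cyc (cj y g)}"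
      using cyc_cj[OF yp] by auto
    show "{z. cyc z = cyc (cj y g)} \<subseteq> cj y ` {z. cyc z = cyc g}"
    proof
      fix z assume "z \<in> {z. cyc z = cyc (cj y g)}"
      then have cz: "cyc z = cj y ` cyc g" using cyc_cj[OF yp] by simp
      then have "z \<in> cj y ` cyc g" using self_cyc[of z] by simp
      then obtain w where w: "z = cj y w" by blast
      then have "cj y ` cyc w = cj y ` cyc g" using cz cyc_cj[OF yp] by simp
      then have "cyc w = cyc g" using injc by (simp add: inj_image_eq_iff)
      then show "z \<in> cj y ` {z. cyc z = cyc g}" using w by blast
    qed
  qed
qed

end



lemma comp_sub: "D \<in> components V E \<Longrightarrow> D \<subseteq> V"
  unfolding components_def conn_rel_def by (auto elim!: quotientE)

lemma comp_iff:
  assumes sym: "\<And>a b. E a b \<Longrightarrow> E b a" and D: "D \<in> components V E" and x: "x \<in> D"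
  shows "y \<in> D \<longleftrightarrow> (x, y) \<in> conn_rel V E"
proof -
  obtain z where z: "z \<in> V" "D = conn_rel V E `` {z}" using D unfolding components_def by (auto elim: quotientE)
  have zx: "(z, x) \<in> conn_rel V E" using x z by simp
  have xz: "(x, z) \<in> conn_rel V E" using conn_sym[OF sym zx] .
  show ?thesis
  proof
    assume "y \<in> D" then have "(z, y) \<in> conn_rel V E" using z by simp
    with xz show "(x, y) \<in> conn_rel V E" by (rule conn_trans)
  next
    assume "(x, y) \<in> conn_rel V E"
    with zx have "(z, y) \<in> conn_rel V E" by (rule conn_trans)
    then show "y \<in> D" using z by simp
  qed
qed

lemma comp_of:
  assumes "x \<in> V"
  shows "component_of V E x \<in> components V E" "x \<in> component_of V E x"
  unfolding component_of_def components_def using assms conn_refl[OF assms]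
  by (auto intro: quotientI)

lemma comp_disj:
  assumes sym: "\<And>a b. E a b \<Longrightarrow> E b a" and D: "D1 \<in> components V E" "D2 \<in> components V E"
    and x: "x \<in> D1" "x \<in> D2"
  shows "D1 = D2"
  using comp_iff[OF sym D(1) x(1)] comp_iff[OF sym D(2) x(2)] by blast

lemma finite_comps: "finite V \<Longrightarrow> finite (components V E)"
  unfolding components_def conn_rel_def by (rule finite_quotient) auto

context PG begin

lemma finQ: "finite (qvert G)"
  unfolding qvert_def G0_def using finG by simp

lemma qvert_sub: "X \<in> qvert G \<Longrightarrow> X \<subseteq> G0 G"
  using qvert_cls by blast

lemma Phi_Q: assumes y: "y \<in> normalizer_S n G" and X: "X \<in> qvert G"
  shows "cj y ` X \<in> qvert G"
proof -
  have yp: "y permutes {1..n}" and yG: "cj y ` G = G" using normD[OF y] by auto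
  obtain g where g: "g \<in> G0 G" "X = cls G g" using X unfolding qvert_def by auto
  have gG: "g \<in> G" "g \<noteq> id" using g unfolding G0_def by auto
  have "cj y g \<in> G" using yG gG by blast
  moreover have "cj y g \<noteq> id" using cj_id[OF yp] cj_inj[OF yp] gG(2) by (metis injD)
  ultimately have "cj y g \<in> G0 G" unfolding G0_def by simp
  then show ?thesis using cls_cj[OF y gG(1)] g unfolding qvert_def by simp
qed

lemma Phi_vt: assumes y: "y \<in> normalizer_S n G" and X: "X \<in> qvert G"
  shows "vt (cj y ` X) = vt X"
proof -
  have yp: "y permutes {1..n}" using normD[OF y] by auto
  obtain g where g: "g \<in> X" using qvert_ne[OF X] by blast
  have "cj y g \<in> cj y ` X" using g by blast
  then have "vt (cj y ` X) = ptype_of n (cj y g)" using vt_mem[OF Phi_Q[OF y X]] by simp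
  also have "\<dots> = ptype_of n g" by (rule ptype_cj[OF yp])
  also have "\<dots> = vt X" using vt_mem[OF X g] .
  finally show ?thesis .
qed

lemma Phi_inj: assumes y: "y \<in> normalizer_S n G"
  shows "cj y ` X = cj y ` Y \<longleftrightarrow> X = Y"
  using cj_inj normD[OF y] by (metis inj_image_eq_iff)

lemma Phi_adj: assumes y: "y \<in> normalizer_S n G" and A: "qadj X Y"
  shows "qadj (cj y ` X) (cj y ` Y)"
proof -
  have yp: "y permutes {1..n}" using normD[OF y] by auto
  obtain x y' m where xy: "x \<in> X" "y' \<in> Y" "m > 0" "x = y' ^^ m \<or> y' = x ^^ m" "X \<noteq> Y"
    using A unfolding qadj_def by blast
  have "cj y x = (cj y y') ^^ m \<or> cj y y' = (cj y x) ^^ m"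
    using xy(4) cj_pow[OF yp] by auto
  moreover have "cj y ` X \<noteq> cj y ` Y" using xy(5) Phi_inj[OF y] by simp
  ultimately show ?thesis unfolding qadj_def using xy(1,2,3) by blast
qed

lemma Phi_conn: assumes y: "y \<in> normalizer_S n G" and c: "(X, Y) \<in> conn_rel (qvert G) qadj"
  shows "(cj y ` X, cj y ` Y) \<in> conn_rel (qvert G) qadj"
proof -
  have X: "X \<in> qvert G" using conn_memD[OF c] by simp
  from c show ?thesis
  proof (induction rule: conn_induct)
    case refl show ?case by (rule conn_refl[OF Phi_Q[OF y X]])
  next
    case (step Y Z)
    have "(cj y ` Y, cj y ` Z) \<in> conn_rel (qvert G) qadj"
      using conn_edge[of "cj y ` Y" "qvert G" "cj y ` Z" qadj] Phi_Q[OF y step(2)] Phi_Q[OF y step(3)] Phi_adj[OF y step(4)]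
      by blast
    with step(5) show ?case by (rule conn_trans)
  qed
qed

lemma cnt_le:
  assumes y: "y \<in> normalizer_S n G" and D: "D \<in> components (qvert G) qadj"
    and D': "D' \<in> components (qvert G) qadj" and X0: "X0 \<in> D" and X0': "cj y ` X0 \<in> D'"
  shows "card {X \<in> D. vt X = T} \<le> card {X \<in> D'. vt X = T}"
proof (rule card_inj_on_le)
  show "inj_on (\<lambda>X. cj y ` X) {X \<in> D. vt X = T}" using Phi_inj[OF y] by (simp add: inj_on_def)
  show "finite {X \<in> D'. vt X = T}" using comp_sub[OF D'] finQ finite_subset by fastforce
  show "(\<lambda>X. cj y ` X) ` {X \<in> D. vt X = T} \<subseteq> {X \<in> D'. vt X = T}"
  proof
    fix Z assume "Z \<in> (\<lambda>X. cj y ` X) ` {X \<in> D. vt X = T}"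
    then obtain X where X: "X \<in> D" "vt X = T" "Z = cj y ` X" by blast
    have XQ: "X \<in> qvert G" using comp_sub[OF D] X(1) by blast
    have "(X0, X) \<in> conn_rel (qvert G) qadj" using comp_iff[OF qadj_sym D X0] X(1) by simp
    then have "(cj y ` X0, cj y ` X) \<in> conn_rel (qvert G) qadj" by (rule Phi_conn[OF y])
    then have "Z \<in> D'" using comp_iff[OF qadj_sym D' X0'] X(3) by simp
    moreover have "vt Z = T" using Phi_vt[OF y XQ] X by simp
    ultimately show "Z \<in> {X \<in> D'. vt X = T}" by simp
  qed
qed

lemma same_type_cnt:
  assumes fc: "fusion_controlled n G"
    and D1: "D1 \<in> components (qvert G) qadj" and D2: "D2 \<in> components (qvert G) qadj"
    and X1: "X1 \<in> D1" and X2: "X2 \<in> D2" and eq: "vt X1 = vt X2"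
  shows "card {X \<in> D1. vt X = T} = card {X \<in> D2. vt X = T}"
proof -
  have X1Q: "X1 \<in> qvert G" using comp_sub[OF D1] X1 by blast
  have X2Q: "X2 \<in> qvert G" using comp_sub[OF D2] X2 by blast
  obtain g1 where g1: "g1 \<in> X1" using qvert_ne[OF X1Q] by blast
  obtain g2 where g2: "g2 \<in> X2" using qvert_ne[OF X2Q] by blast
  have g1': "g1 \<in> G0 G" "cls G g1 = X1" using qvert_cls[OF X1Q g1] by auto
  have g2': "g2 \<in> G0 G" "cls G g2 = X2" using qvert_cls[OF X2Q g2] by auto
  have gG: "g1 \<in> G" "g2 \<in> G" using g1' g2' unfolding G0_def by auto
  have "ptype_of n g1 = ptype_of n g2" using vt_mem[OF X1Q g1] vt_mem[OF X2Q g2] eq by simp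
  then obtain \<sigma> where \<sigma>: "\<sigma> permutes {1..n}" "inv' \<sigma> \<circ> g1 \<circ> \<sigma> = g2"
    using conj_same_type[OF G_perm[OF gG(1)] G_perm[OF gG(2)]] by blast
  then obtain y where y: "y \<in> normalizer_S n G" "inv' \<sigma> \<circ> g1 \<circ> \<sigma> = inv' y \<circ> g1 \<circ> y"
    using fc gG unfolding fusion_controlled_def by blast
  have yp: "y permutes {1..n}" using normD[OF y(1)] by auto
  have cg: "cj y g1 = g2" using y(2) \<sigma>(2) unfolding cj_def by simp
  have im1: "cj y ` X1 = X2" using cls_cj[OF y(1) gG(1)] g1' g2' cg by simp
  have im2: "cj (inv' y) ` X2 = X1" using im1[symmetric] cj_inv[OF yp] by (simp add: image_image)
  have "card {X \<in> D1. vt X = T} \<le> card {X \<in> D2. vt X = T}"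
    by (rule cnt_le[OF y(1) D1 D2 X1]) (simp add: im1 X2)
  moreover have "card {X \<in> D2. vt X = T} \<le> card {X \<in> D1. vt X = T}"
    by (rule cnt_le[OF norm_inv[OF y(1)] D2 D1 X2]) (simp add: im2 X1)
  ultimately show ?thesis by simp
qed

end



lemma type_adj_sym: "type_adj a b \<Longrightarrow> type_adj b a"
  unfolding type_adj_def by blast

context PG begin

lemma vt_conn: assumes c: "(X, Y) \<in> conn_rel (qvert G) qadj"
  shows "(vt X, vt Y) \<in> conn_rel (types0 n G) type_adj"
proof -
  have X: "X \<in> qvert G" using conn_memD[OF c] by simp
  from c show ?thesis
  proof (induction rule: conn_induct)
    case refl show ?case by (rule conn_refl[OF vt_types0[OF X]])
  next
    case (step Y Z)
    have "(vt Y, vt Z) \<in> conn_rel (types0 n G) type_adj"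
    proof (cases "vt Y = vt Z")
      case True then show ?thesis using conn_refl[OF vt_types0[OF step(2)]] by simp
    next
      case False
      then have "type_adj (vt Y) (vt Z)" using qadj_types[OF step(2,3,4)] by simp
      then show ?thesis using conn_edge[of "vt Y" "types0 n G" "vt Z" type_adj]
          vt_types0[OF step(2)] vt_types0[OF step(3)] by blast
    qed
    with step(5) show ?case by (rule conn_trans)
  qed
qed

lemma pow_conn:
  assumes g: "g \<in> G0 G" and a: "a > 0" and h: "g ^^ a \<noteq> id"
  shows "cls G (g ^^ a) \<in> qvert G" "(cls G g, cls G (g ^^ a)) \<in> conn_rel (qvert G) qadj"
proof -
  have gG: "g \<in> G" using g unfolding G0_def by simp
  have hG0: "g ^^ a \<in> G0 G" using pow_in[OF gG] h unfolding G0_def by simp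
  show hQ: "cls G (g ^^ a) \<in> qvert G" using hG0 unfolding qvert_def by simp
  have gQ: "cls G g \<in> qvert G" using g unfolding qvert_def by simp
  show "(cls G g, cls G (g ^^ a)) \<in> conn_rel (qvert G) qadj"
  proof (cases "cls G g = cls G (g ^^ a)")
    case True then show ?thesis using conn_refl[OF gQ] by simp
  next
    case False
    have "g \<in> cls G g" "g ^^ a \<in> cls G (g ^^ a)" using cls_self gG pow_in[OF gG] by auto
    then have "qadj (cls G g) (cls G (g ^^ a))" unfolding qadj_def using False a by blast
    then show ?thesis using conn_edge[of "cls G g" "qvert G" "cls G (g ^^ a)" qadj] gQ hQ by blast
  qed
qed

lemma walk:
  assumes fc: "fusion_controlled n G"
    and D0: "D0 \<in> components (qvert G) qadj" and X0: "X0 \<in> D0"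
    and c: "(vt X0, T') \<in> conn_rel (types0 n G) type_adj"
  shows "\<forall>D\<in>components (qvert G) qadj. (\<exists>X\<in>D. vt X = T') \<longrightarrow>
           (\<forall>T. card {X \<in> D. vt X = T} = card {X \<in> D0. vt X = T})"
  using c
proof (induction rule: conn_induct)
  case refl
  show ?case
  proof (intro ballI impI allI)
    fix D T assume D: "D \<in> components (qvert G) qadj" and "\<exists>X\<in>D. vt X = vt X0"
    then obtain X where X: "X \<in> D" "vt X = vt X0" by blast
    show "card {X \<in> D. vt X = T} = card {X \<in> D0. vt X = T}"
      by (rule same_type_cnt[OF fc D D0 X(1) X0 X(2)])
  qed
next
  case (step T1 T2)
  note T1 = step(2) and T2 = step(3) and adj = step(4) and IH = step(5)
  show ?case
  proof (intro ballI impI allI)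
    fix D T assume D: "D \<in> components (qvert G) qadj" and "\<exists>X\<in>D. vt X = T2"
    then obtain X' where X': "X' \<in> D" "vt X' = T2" by blast
    have X'Q: "X' \<in> qvert G" using comp_sub[OF D] X'(1) by blast
    obtain g' where g': "g' \<in> X'" using qvert_ne[OF X'Q] by blast
    have g'': "g' \<in> G0 G" "cls G g' = X'" using qvert_cls[OF X'Q g'] by auto
    have g'G: "g' \<in> G" using g'' unfolding G0_def by simp
    have tg': "ptype_of n g' = T2" using vt_mem[OF X'Q g'] X'(2) by simp
    obtain a where a: "a > 0" "T1 = type_pow T2 a \<or> T2 = type_pow T1 a"
      using adj unfolding type_adj_def by blast
    from a(2) show "card {X \<in> D. vt X = T} = card {X \<in> D0. vt X = T}"
    proof
      assume e: "T1 = type_pow T2 a"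
      have th: "ptype_of n (g' ^^ a) = T1" using ptype_pow[OF G_perm[OF g'G]] tg' e by simp
      then have hid: "g' ^^ a \<noteq> id" using type_in_types0[OF pow_in[OF g'G, of a]] T1 by simp
      note pc = pow_conn[OF g''(1) a(1) hid]
      have "cls G (g' ^^ a) \<in> D" using comp_iff[OF qadj_sym D X'(1)] pc(2) g''(2) by simp
      moreover have "vt (cls G (g' ^^ a)) = T1"
        using vt_cls th pow_in[OF g'G] hid unfolding G0_def by simp
      ultimately show ?thesis using IH D by blast
    next
      assume e: "T2 = type_pow T1 a"
      obtain g1 where g1: "g1 \<in> G0 G" "ptype_of n g1 = T1" using T1 unfolding types0_def by auto
      have g1G: "g1 \<in> G" using g1 unfolding G0_def by simp
      have th: "ptype_of n (g1 ^^ a) = T2" using ptype_pow[OF G_perm[OF g1G]] g1(2) e by simp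
      then have hid: "g1 ^^ a \<noteq> id" using type_in_types0[OF pow_in[OF g1G, of a]] T2 by simp
      note pc = pow_conn[OF g1(1) a(1) hid]
      have g1Q: "cls G g1 \<in> qvert G" using g1(1) unfolding qvert_def by simp
      define D1 where "D1 = component_of (qvert G) qadj (cls G g1)"
      have D1: "D1 \<in> components (qvert G) qadj" "cls G g1 \<in> D1"
        unfolding D1_def using comp_of[OF g1Q] by auto
      have "cls G (g1 ^^ a) \<in> D1" using comp_iff[OF qadj_sym D1(1) D1(2)] pc(2) by simp
      moreover have "vt (cls G (g1 ^^ a)) = T2"
        using vt_cls th pow_in[OF g1G] hid unfolding G0_def by simp
      ultimately have "card {X \<in> D. vt X = T} = card {X \<in> D1. vt X = T}"
        using same_type_cnt[OF fc D D1(1) X'(1)] X'(2) by simp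
      moreover have "card {X \<in> D1. vt X = T} = card {X \<in> D0. vt X = T}"
        using IH D1 vt_cls[OF g1(1)] g1(2) by blast
      ultimately show ?thesis by simp
    qed
  qed
qed

end



context PG begin

lemma count_i:
  assumes fc: "fusion_controlled n G" and Ti: "Ti \<in> types0 n G"
    and Ci: "Ci \<in> components (qvert G) qadj" and CiT: "\<exists>X\<in>Ci. \<exists>\<psi>\<in>X. ptype_of n \<psi> = Ti"
  shows "card {D \<in> components (qvert G) qadj. \<exists>X\<in>D. (Ti, vt X) \<in> conn_rel (types0 n G) type_adj}
           * kC n Ci Ti * totient (type_order Ti) = mu n Ti G"
proof -
  let ?Q = "qvert G" and ?QC = "components (qvert G) qadj" and ?cT = "conn_rel (types0 n G) type_adj"
  define Si where "Si = {D \<in> ?QC. \<exists>X\<in>D. (Ti, vt X) \<in> ?cT}"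
  define k where "k = card {X \<in> Ci. vt X = Ti}"
  define W where "W = {X \<in> ?Q. vt X = Ti}"
  have CiQ: "Ci \<subseteq> ?Q" using comp_sub[OF Ci] .
  have kk: "kC n Ci Ti = k" unfolding k_def using kC_vt[OF CiQ] .
  obtain X0 \<psi> where X0\<psi>: "X0 \<in> Ci" "\<psi> \<in> X0" "ptype_of n \<psi> = Ti" using CiT by blast
  have X0: "X0 \<in> Ci" "vt X0 = Ti" using X0\<psi> vt_mem[of X0 \<psi>] CiQ by auto
  have finQC: "finite ?QC" using finite_comps[OF finQ] .
  have finSi: "finite Si" unfolding Si_def using finQC by simp
  have cnt: "card {X \<in> D. vt X = Ti} = k" if D: "D \<in> Si" for D
  proof -
    obtain X where X: "D \<in> ?QC" "X \<in> D" "(Ti, vt X) \<in> ?cT" using D unfolding Si_def by blast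
    have "(vt X0, vt X) \<in> ?cT" using X(3) X0(2) by simp
    from walk[OF fc Ci X0(1) this] X(1,2) show ?thesis unfolding k_def by blast
  qed
  have WU: "W = (\<Union>D\<in>Si. {X \<in> D. vt X = Ti})"
  proof
    show "W \<subseteq> (\<Union>D\<in>Si. {X \<in> D. vt X = Ti})"
    proof
      fix X assume "X \<in> W"
      then have X: "X \<in> ?Q" "vt X = Ti" unfolding W_def by auto
      define D where "D = component_of ?Q qadj X"
      have D: "D \<in> ?QC" "X \<in> D" unfolding D_def using comp_of[OF X(1)] by auto
      have "(Ti, vt X) \<in> ?cT" using conn_refl[OF Ti] X(2) by simp
      then have "D \<in> Si" unfolding Si_def using D by blast
      then show "X \<in> (\<Union>D\<in>Si. {X \<in> D. vt X = Ti})" using D X by blast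
    qed
    show "(\<Union>D\<in>Si. {X \<in> D. vt X = Ti}) \<subseteq> W"
      unfolding W_def Si_def using comp_sub by blast
  qed
  have cardW: "card W = card Si * k"
  proof -
    have "card W = (\<Sum>D\<in>Si. card {X \<in> D. vt X = Ti})"
      unfolding WU
    proof (rule card_UN_disjoint[OF finSi])
      show "\<forall>D\<in>Si. finite {X \<in> D. vt X = Ti}"
      proof
        fix D assume "D \<in> Si"
        then have "D \<subseteq> ?Q" using comp_sub unfolding Si_def by blast
        then have "{X \<in> D. vt X = Ti} \<subseteq> ?Q" by blast
        then show "finite {X \<in> D. vt X = Ti}" using finQ finite_subset by blast
      qed
      show "\<forall>D1\<in>Si. \<forall>D2\<in>Si. D1 \<noteq> D2 \<longrightarrow> {X \<in> D1. vt X = Ti} \<inter> {X \<in> D2. vt X = Ti} = {}"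
      proof (intro ballI impI)
        fix D1 D2 assume D: "D1 \<in> Si" "D2 \<in> Si" "D1 \<noteq> D2"
        have DQ: "D1 \<in> ?QC" "D2 \<in> ?QC" using D unfolding Si_def by auto
        show "{X \<in> D1. vt X = Ti} \<inter> {X \<in> D2. vt X = Ti} = {}"
        proof (rule ccontr)
          assume "{X \<in> D1. vt X = Ti} \<inter> {X \<in> D2. vt X = Ti} \<noteq> {}"
          then obtain X where "X \<in> D1" "X \<in> D2" by blast
          then have "D1 = D2" using comp_disj[OF qadj_sym DQ] by blast
          then show False using D(3) by simp
        qed
      qed
    qed
    also have "\<dots> = (\<Sum>D\<in>Si. k)" using cnt by simp
    finally show ?thesis by simp
  qed
  have M: "{\<psi> \<in> G. ptype_of n \<psi> = Ti} = \<Union>W"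
  proof
    show "{\<psi> \<in> G. ptype_of n \<psi> = Ti} \<subseteq> \<Union>W"
    proof
      fix \<psi> assume "\<psi> \<in> {\<psi> \<in> G. ptype_of n \<psi> = Ti}"
      then have p: "\<psi> \<in> G" "ptype_of n \<psi> = Ti" by auto
      then have "\<psi> \<noteq> id" using type_in_types0[OF p(1)] Ti by simp
      then have pG0: "\<psi> \<in> G0 G" using p(1) unfolding G0_def by simp
      then have "cls G \<psi> \<in> W" unfolding W_def qvert_def using vt_cls p(2) by auto
      moreover have "\<psi> \<in> cls G \<psi>" using cls_self[OF p(1)] .
      ultimately show "\<psi> \<in> \<Union>W" by blast
    qed
    show "\<Union>W \<subseteq> {\<psi> \<in> G. ptype_of n \<psi> = Ti}"
    proof
      fix \<psi> assume "\<psi> \<in> \<Union>W"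
      then obtain X where X: "X \<in> ?Q" "vt X = Ti" "\<psi> \<in> X" unfolding W_def by auto
      then show "\<psi> \<in> {\<psi> \<in> G. ptype_of n \<psi> = Ti}"
        using qvert_cls[OF X(1) X(3)] vt_mem[OF X(1) X(3)] unfolding G0_def by auto
    qed
  qed
  have finW: "finite W" unfolding W_def using finQ by simp
  have cardM: "card (\<Union>W) = (\<Sum>X\<in>W. card X)"
  proof (rule card_Union_disjoint)
    show "pairwise disjnt W"
    proof (rule pairwiseI)
      fix X Y assume XY: "X \<in> W" "Y \<in> W" "X \<noteq> Y"
      show "disjnt X Y" unfolding disjnt_def
      proof (rule ccontr)
        assume "X \<inter> Y \<noteq> {}"
        then obtain z where z: "z \<in> X" "z \<in> Y" by blast
        have "cls G z = X" "cls G z = Y" using qvert_cls z XY unfolding W_def by auto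
        then show False using XY(3) by simp
      qed
    qed
    show "finite X" if "X \<in> W" for X
    proof -
      have "X \<subseteq> G" using that qvert_sub unfolding W_def G0_def by blast
      then show ?thesis using finG finite_subset by blast
    qed
  qed
  have cardX: "card X = totient (type_order Ti)" if "X \<in> W" for X
  proof -
    have X: "X \<in> ?Q" "vt X = Ti" using that unfolding W_def by auto
    obtain g where g: "g \<in> X" using qvert_ne[OF X(1)] by blast
    have g': "g \<in> G0 G" "cls G g = X" using qvert_cls[OF X(1) g] by auto
    have "card X = totient (type_order (ptype_of n g))"
      using card_cls g' unfolding G0_def by auto
    then show ?thesis using vt_mem[OF X(1) g] X(2) by simp
  qed
  have "mu n Ti G = card W * totient (type_order Ti)"
    unfolding mu_def M cardM using cardX by simp
  then show ?thesis using cardW kk unfolding Si_def by simp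
qed

end



lemma comp_ne: "D \<in> components V E \<Longrightarrow> \<exists>x. x \<in> D"
  unfolding components_def by (auto elim!: quotientE intro: conn_refl)

lemma type_comp_eq: "type_comp n G T = conn_rel (types0 n G) type_adj `` {T}"
  unfolding type_comp_def component_of_def ..

theorem theoremA:
  fixes n :: nat and G :: "perm set"
    and T :: "nat \<Rightarrow> ptype" and C :: "nat \<Rightarrow> perm set set"
  assumes "n \<ge> 2"
    and "subgroup G (sym_group n)"
    and "fusion_controlled n G"
    and "\<forall>i\<in>{1..c0_types n G}. T i \<in> types0 n G"
    and "\<forall>i\<in>{1..c0_types n G}. \<forall>j\<in>{1..c0_types n G}.
           i \<noteq> j \<longrightarrow> type_comp n G (T i) \<noteq> type_comp n G (T j)"
    and "\<forall>i\<in>{1..c0_types n G}. C i \<in> components (qvert G) qadj \<and>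
           (\<exists>X\<in>C i. \<exists>\<psi>\<in>X. ptype_of n \<psi> = T i)"
  shows "real (c0 G) =
    (\<Sum>i = 1..c0_types n G.
       real (mu n (T i) G) / (real (totient (type_order (T i))) * real (kC n (C i) (T i))))"
proof -
  interpret PG n G by (rule PG.intro[OF assms(2)])
  let ?c = "c0_types n G" and ?QC = "components (qvert G) qadj"
    and ?TC = "components (types0 n G) type_adj" and ?cT = "conn_rel (types0 n G) type_adj"
  define I where "I = {1..?c}"
  define S where "S i = {D \<in> ?QC. \<exists>X\<in>D. (T i, vt X) \<in> ?cT}" for i
  have Ti: "T i \<in> types0 n G" if "i \<in> I" for i using assms(4) that unfolding I_def by blast
  have finT: "finite (types0 n G)" unfolding types0_def G0_def using finG by simp
  have finTC: "finite ?TC" using finite_comps[OF finT] .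
  have tcTC: "type_comp n G (T i) \<in> ?TC" if "i \<in> I" for i
    unfolding type_comp_def using comp_of(1)[OF Ti[OF that]] .
  have inj: "inj_on (\<lambda>i. type_comp n G (T i)) I"
    using assms(5) unfolding I_def inj_on_def by blast
  have surjTC: "(\<lambda>i. type_comp n G (T i)) ` I = ?TC"
  proof (rule card_subset_eq[OF finTC])
    show "(\<lambda>i. type_comp n G (T i)) ` I \<subseteq> ?TC" using tcTC by blast
    show "card ((\<lambda>i. type_comp n G (T i)) ` I) = card ?TC"
      using card_image[OF inj] unfolding I_def c0_types_def by simp
  qed
  have eqv: "equiv (types0 n G) ?cT" using equiv_conn[OF type_adj_sym] .
  have QCU: "?QC = (\<Union>i\<in>I. S i)"
  proof
    show "?QC \<subseteq> (\<Union>i\<in>I. S i)"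
    proof
      fix D assume D: "D \<in> ?QC"
      obtain X where X: "X \<in> D" using comp_ne[OF D] by blast
      have XQ: "X \<in> qvert G" using comp_sub[OF D] X by blast
      have vX: "vt X \<in> types0 n G" using vt_types0[OF XQ] .
      have "type_comp n G (vt X) \<in> ?TC"
        unfolding type_comp_def using comp_of(1)[OF vX] .
      then obtain i where i: "i \<in> I" "type_comp n G (vt X) = type_comp n G (T i)"
        unfolding surjTC[symmetric] by (rule imageE) (metis)
      have "vt X \<in> type_comp n G (vt X)" unfolding type_comp_def using comp_of(2)[OF vX] .
      then have "(T i, vt X) \<in> ?cT" using i(2) unfolding type_comp_eq by simp
      then have "D \<in> S i" unfolding S_def using D X by blast
      then show "D \<in> (\<Union>i\<in>I. S i)" using i(1) by blast
    qed
    show "(\<Union>i\<in>I. S i) \<subseteq> ?QC" unfolding S_def by blast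
  qed
  have disj: "S i \<inter> S j = {}" if ij: "i \<in> I" "j \<in> I" "i \<noteq> j" for i j
  proof (rule ccontr)
    assume "S i \<inter> S j \<noteq> {}"
    then obtain D X Y where D: "D \<in> ?QC" "X \<in> D" "Y \<in> D" "(T i, vt X) \<in> ?cT" "(T j, vt Y) \<in> ?cT"
      unfolding S_def by blast
    have "(X, Y) \<in> conn_rel (qvert G) qadj" using comp_iff[OF qadj_sym D(1) D(2)] D(3) by simp
    then have "(vt X, vt Y) \<in> ?cT" by (rule vt_conn)
    with D(4) have "(T i, vt Y) \<in> ?cT" by (rule conn_trans)
    moreover have "(vt Y, T j) \<in> ?cT" using conn_sym[OF type_adj_sym D(5)] .
    ultimately have "(T i, T j) \<in> ?cT" by (rule conn_trans)
    then have "type_comp n G (T i) = type_comp n G (T j)"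
      unfolding type_comp_eq by (rule equiv_class_eq[OF eqv])
    then show False using assms(5) ij unfolding I_def by blast
  qed
  have finQC: "finite ?QC" using finite_comps[OF finQ] .
  have cardQC: "card ?QC = (\<Sum>i\<in>I. card (S i))"
    unfolding QCU
  proof (rule card_UN_disjoint)
    show "finite I" unfolding I_def by simp
    show "\<forall>i\<in>I. finite (S i)" using finQC unfolding S_def by simp
    show "\<forall>i\<in>I. \<forall>j\<in>I. i \<noteq> j \<longrightarrow> S i \<inter> S j = {}" using disj by blast
  qed
  have each: "real (card (S i)) =
      real (mu n (T i) G) / (real (totient (type_order (T i))) * real (kC n (C i) (T i)))"
    if i: "i \<in> I" for i
  proof -
    have Ci: "C i \<in> ?QC" "\<exists>X\<in>C i. \<exists>\<psi>\<in>X. ptype_of n \<psi> = T i" using assms(6) i unfolding I_def by auto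
    have cnt: "card (S i) * kC n (C i) (T i) * totient (type_order (T i)) = mu n (T i) G"
      unfolding S_def by (rule count_i[OF assms(3) Ti[OF i] Ci])
    obtain X \<psi> where X: "X \<in> C i" "\<psi> \<in> X" "ptype_of n \<psi> = T i" using Ci(2) by blast
    have "finite (C i)" using comp_sub[OF Ci(1)] finQ finite_subset by blast
    then have "finite {X \<in> C i. \<exists>\<psi>\<in>X. ptype_of n \<psi> = T i}" by simp
    moreover have "X \<in> {X \<in> C i. \<exists>\<psi>\<in>X. ptype_of n \<psi> = T i}" using X by blast
    ultimately have k0: "kC n (C i) (T i) > 0" unfolding kC_def
      using card_gt_0_iff by blast
    obtain g where g: "g \<in> G0 G" "ptype_of n g = T i" using Ti[OF i] unfolding types0_def by auto
    have gG: "g \<in> G" using g(1) unfolding G0_def by simp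
    have "type_order (T i) > 0"
      using type_order_ptype[OF G_perm[OF gG]] cyc_props(2)[OF G_perm[OF gG]] g(2) by simp
    then have t0: "totient (type_order (T i)) > 0" by simp
    have "real (card (S i)) * (real (totient (type_order (T i))) * real (kC n (C i) (T i)))
        = real (mu n (T i) G)"
      using cnt by (metis of_nat_mult mult.commute mult.left_commute)
    then show ?thesis using k0 t0 by (simp add: field_simps)
  qed
  have "real (c0 G) = real (card ?QC)" using c0_eq by simp
  also have "\<dots> = (\<Sum>i\<in>I. real (card (S i)))" unfolding cardQC by simp
  also have "\<dots> = (\<Sum>i\<in>I. real (mu n (T i) G) / (real (totient (type_order (T i))) * real (kC n (C i) (T i))))"
    using each by (rule sum.cong[OF refl])
  finally show ?thesis unfolding I_def .
qed


end
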